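(* For any small cartesian closed category $\mathbf{C}$, there exist a set $S$ and an $S$-sorted CCC $\mathbf{CFam}_S\to\tilde{\mathbf{C}}$ such that $\mathbf{C}$ is equivalent to $\tilde{\mathbf{C}}$.
   Context: $\mathsf{BiMag}_S$ is the set of formal expressions generated inductively by: each $X\in S$, the symbol $1$, and $X\times Y$, $Y^X$ for $X,Y\in\mathsf{BiMag}_S$. $\mathbf{CFam}_S$ is the free cartesian closed category with object set $\mathsf{BiMag}_S$ and no generating morphisms. An $S$-sorted CCC is a CCC $\tilde{\mathbf{C}}$ with $\mathrm{Ob}(\tilde{\mathbf{C}})=\mathsf{BiMag}_S$ together with a cartesian closed functor $\iota:\mathbf{CFam}_S\to\tilde{\mathbf{C}}$ that is the identity on objects. *)

theory Defs
  imports Main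
begin

record ('o, 'm) cat =
  Obj :: "'o set"
  Arr :: "'m set"
  Dom :: "'m \<Rightarrow> 'o"
  Cod :: "'m \<Rightarrow> 'o"
  Idt :: "'o \<Rightarrow> 'm"
  Cmp :: "'m \<Rightarrow> 'm \<Rightarrow> 'm"   (* Cmp C g f = g \<circ> f *)

definition hom :: "('o, 'm) cat \<Rightarrow> 'o \<Rightarrow> 'o \<Rightarrow> 'm set" where
  "hom C a b = {f \<in> Arr C. Dom C f = a \<and> Cod C f = b}"

definition category :: "('o, 'm) cat \<Rightarrow> bool" where
  "category C \<longleftrightarrow>
     (\<forall>f \<in> Arr C. Dom C f \<in> Obj C \<and> Cod C f \<in> Obj C) \<and>
     (\<forall>a \<in> Obj C. Idt C a \<in> hom C a a) \<and>
     (\<forall>f g. f \<in> Arr C \<and> g \<in> Arr C \<and> Cod C f = Dom C g \<longrightarrow>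
        Cmp C g f \<in> hom C (Dom C f) (Cod C g)) \<and>
     (\<forall>f \<in> Arr C. Cmp C (Idt C (Cod C f)) f = f \<and> Cmp C f (Idt C (Dom C f)) = f) \<and>
     (\<forall>f g h. f \<in> Arr C \<and> g \<in> Arr C \<and> h \<in> Arr C \<and> Cod C f = Dom C g \<and> Cod C g = Dom C h
        \<longrightarrow> Cmp C h (Cmp C g f) = Cmp C (Cmp C h g) f)"

definition is_terminal :: "('o, 'm) cat \<Rightarrow> 'o \<Rightarrow> bool" where
  "is_terminal C t \<longleftrightarrow> t \<in> Obj C \<and> (\<forall>a \<in> Obj C. \<exists>!f. f \<in> hom C a t)"

definition is_product :: "('o, 'm) cat \<Rightarrow> 'o \<Rightarrow> 'o \<Rightarrow> 'o \<Rightarrow> 'm \<Rightarrow> 'm \<Rightarrow> bool" where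
  "is_product C a b p p1 p2 \<longleftrightarrow>
     p \<in> Obj C \<and> p1 \<in> hom C p a \<and> p2 \<in> hom C p b \<and>
     (\<forall>c \<in> Obj C. \<forall>f \<in> hom C c a. \<forall>g \<in> hom C c b.
        \<exists>!h. h \<in> hom C c p \<and> Cmp C p1 h = f \<and> Cmp C p2 h = g)"

definition is_exponential ::
  "('o, 'm) cat \<Rightarrow> 'o \<Rightarrow> 'o \<Rightarrow> 'o \<Rightarrow> 'o \<Rightarrow> 'm \<Rightarrow> 'm \<Rightarrow> 'm \<Rightarrow> bool" where
  "is_exponential C x y e p p1 p2 ev \<longleftrightarrow>
     is_product C e x p p1 p2 \<and> ev \<in> hom C p y \<and>
     (\<forall>c q q1 q2 f. is_product C c x q q1 q2 \<and> f \<in> hom C q y \<longrightarrow>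
        (\<exists>!g. g \<in> hom C c e \<and>
           (\<forall>h. h \<in> hom C q p \<and> Cmp C p1 h = Cmp C g q1 \<and> Cmp C p2 h = q2
                \<longrightarrow> Cmp C ev h = f)))"

definition cartesian_closed :: "('o, 'm) cat \<Rightarrow> bool" where
  "cartesian_closed C \<longleftrightarrow> category C \<and>
     (\<exists>t. is_terminal C t) \<and>
     (\<forall>a \<in> Obj C. \<forall>b \<in> Obj C. \<exists>p p1 p2. is_product C a b p p1 p2) \<and>
     (\<forall>x \<in> Obj C. \<forall>y \<in> Obj C. \<exists>e p p1 p2 ev. is_exponential C x y e p p1 p2 ev)"

definition "functor" ::
  "('o1, 'm1) cat \<Rightarrow> ('o2, 'm2) cat \<Rightarrow> ('o1 \<Rightarrow> 'o2) \<Rightarrow> ('m1 \<Rightarrow> 'm2) \<Rightarrow> bool" where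
  "functor C D Fo Fm \<longleftrightarrow> category C \<and> category D \<and>
     (\<forall>a \<in> Obj C. Fo a \<in> Obj D) \<and>
     (\<forall>f \<in> Arr C. Fm f \<in> hom D (Fo (Dom C f)) (Fo (Cod C f))) \<and>
     (\<forall>a \<in> Obj C. Fm (Idt C a) = Idt D (Fo a)) \<and>
     (\<forall>f g. f \<in> Arr C \<and> g \<in> Arr C \<and> Cod C f = Dom C g \<longrightarrow>
        Fm (Cmp C g f) = Cmp D (Fm g) (Fm f))"

text \<open>Cartesian closed functor: preserves terminal objects, binary products and
  exponentials (up to the canonical comparison isomorphisms, i.e. maps such
  diagrams to such diagrams).\<close>
definition cc_functor ::
  "('o1, 'm1) cat \<Rightarrow> ('o2, 'm2) cat \<Rightarrow> ('o1 \<Rightarrow> 'o2) \<Rightarrow> ('m1 \<Rightarrow> 'm2) \<Rightarrow> bool" where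
  "cc_functor C D Fo Fm \<longleftrightarrow> functor C D Fo Fm \<and>
     (\<forall>t. is_terminal C t \<longrightarrow> is_terminal D (Fo t)) \<and>
     (\<forall>a b p p1 p2. is_product C a b p p1 p2 \<longrightarrow>
        is_product D (Fo a) (Fo b) (Fo p) (Fm p1) (Fm p2)) \<and>
     (\<forall>x y e p p1 p2 ev. is_exponential C x y e p p1 p2 ev \<longrightarrow>
        is_exponential D (Fo x) (Fo y) (Fo e) (Fo p) (Fm p1) (Fm p2) (Fm ev))"

definition is_iso :: "('o, 'm) cat \<Rightarrow> 'm \<Rightarrow> bool" where
  "is_iso C f \<longleftrightarrow> f \<in> Arr C \<and>
     (\<exists>g \<in> hom C (Cod C f) (Dom C f).
        Cmp C g f = Idt C (Dom C f) \<and> Cmp C f g = Idt C (Cod C f))"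

definition nat_iso ::
  "('o1, 'm1) cat \<Rightarrow> ('o2, 'm2) cat \<Rightarrow> ('o1 \<Rightarrow> 'o2) \<Rightarrow> ('m1 \<Rightarrow> 'm2) \<Rightarrow>
   ('o1 \<Rightarrow> 'o2) \<Rightarrow> ('m1 \<Rightarrow> 'm2) \<Rightarrow> ('o1 \<Rightarrow> 'm2) \<Rightarrow> bool" where
  "nat_iso C D Fo Fm Go Gm \<tau> \<longleftrightarrow>
     (\<forall>a \<in> Obj C. \<tau> a \<in> hom D (Fo a) (Go a) \<and> is_iso D (\<tau> a)) \<and>
     (\<forall>f \<in> Arr C. Cmp D (Gm f) (\<tau> (Dom C f)) = Cmp D (\<tau> (Cod C f)) (Fm f))"

definition equivalent_cats :: "('o1, 'm1) cat \<Rightarrow> ('o2, 'm2) cat \<Rightarrow> bool" where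
  "equivalent_cats C D \<longleftrightarrow>
     (\<exists>Fo Fm Go Gm \<eta> \<epsilon>. functor C D Fo Fm \<and> functor D C Go Gm \<and>
        nat_iso C C id id (Go \<circ> Fo) (Gm \<circ> Fm) \<eta> \<and>
        nat_iso D D (Fo \<circ> Go) (Fm \<circ> Gm) id id \<epsilon>)"

text \<open>Exp X Y stands for the exponential Y^X.\<close>
datatype 'a bimag = Base 'a | One | Prod "'a bimag" "'a bimag" | Exp "'a bimag" "'a bimag"

definition BiMag :: "'a set \<Rightarrow> 'a bimag set" where
  "BiMag S = {X. set_bimag X \<subseteq> S}"

text \<open>Raw arrow terms of the free CCC (categorical combinators).\<close>
datatype 'a tm =
    TId "'a bimag" | TComp "'a tm" "'a tm" | TBang "'a bimag"
  | TFst "'a bimag" "'a bimag" | TSnd "'a bimag" "'a bimag" | TPair "'a tm" "'a tm"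
  | TEv "'a bimag" "'a bimag" | TLam "'a tm"

inductive typed :: "'a set \<Rightarrow> 'a tm \<Rightarrow> 'a bimag \<Rightarrow> 'a bimag \<Rightarrow> bool" for S where
  t_id: "A \<in> BiMag S \<Longrightarrow> typed S (TId A) A A"
| t_comp: "typed S f A B \<Longrightarrow> typed S g B C \<Longrightarrow> typed S (TComp g f) A C"
| t_bang: "A \<in> BiMag S \<Longrightarrow> typed S (TBang A) A One"
| t_fst: "A \<in> BiMag S \<Longrightarrow> B \<in> BiMag S \<Longrightarrow> typed S (TFst A B) (Prod A B) A"
| t_snd: "A \<in> BiMag S \<Longrightarrow> B \<in> BiMag S \<Longrightarrow> typed S (TSnd A B) (Prod A B) B"
| t_pair: "typed S f C A \<Longrightarrow> typed S g C B \<Longrightarrow> typed S (TPair f g) C (Prod A B)"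
| t_ev: "X \<in> BiMag S \<Longrightarrow> Y \<in> BiMag S \<Longrightarrow> typed S (TEv X Y) (Prod (Exp X Y) X) Y"
| t_lam: "typed S f (Prod C X) Y \<Longrightarrow> typed S (TLam f) C (Exp X Y)"

inductive teq :: "'a set \<Rightarrow> 'a tm \<Rightarrow> 'a tm \<Rightarrow> bool" for S where
  e_refl: "typed S f A B \<Longrightarrow> teq S f f"
| e_sym: "teq S f g \<Longrightarrow> teq S g f"
| e_trans: "teq S f g \<Longrightarrow> teq S g h \<Longrightarrow> teq S f h"
| e_comp: "teq S f f' \<Longrightarrow> teq S g g' \<Longrightarrow> typed S f A B \<Longrightarrow> typed S g B C \<Longrightarrow>
           teq S (TComp g f) (TComp g' f')"
| e_pair: "teq S f f' \<Longrightarrow> teq S g g' \<Longrightarrow> typed S f C A \<Longrightarrow> typed S g C B \<Longrightarrow>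
           teq S (TPair f g) (TPair f' g')"
| e_lam: "teq S f f' \<Longrightarrow> typed S f (Prod C X) Y \<Longrightarrow> teq S (TLam f) (TLam f')"
| e_idl: "typed S f A B \<Longrightarrow> teq S (TComp (TId B) f) f"
| e_idr: "typed S f A B \<Longrightarrow> teq S (TComp f (TId A)) f"
| e_assoc: "typed S f A B \<Longrightarrow> typed S g B C \<Longrightarrow> typed S h C D \<Longrightarrow>
           teq S (TComp h (TComp g f)) (TComp (TComp h g) f)"
| e_bang: "typed S f A One \<Longrightarrow> teq S f (TBang A)"
| e_fst: "typed S f C A \<Longrightarrow> typed S g C B \<Longrightarrow> teq S (TComp (TFst A B) (TPair f g)) f"
| e_snd: "typed S f C A \<Longrightarrow> typed S g C B \<Longrightarrow> teq S (TComp (TSnd A B) (TPair f g)) g"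
| e_pair_eta: "typed S h C (Prod A B) \<Longrightarrow>
           teq S (TPair (TComp (TFst A B) h) (TComp (TSnd A B) h)) h"
| e_beta: "typed S f (Prod C X) Y \<Longrightarrow>
           teq S (TComp (TEv X Y) (TPair (TComp (TLam f) (TFst C X)) (TSnd C X))) f"
| e_eta: "typed S g C (Exp X Y) \<Longrightarrow>
           teq S (TLam (TComp (TEv X Y) (TPair (TComp g (TFst C X)) (TSnd C X)))) g"

definition CFam :: "'a set \<Rightarrow> ('a bimag, 'a bimag \<times> 'a bimag \<times> 'a tm set) cat" where
  "CFam S = \<lparr> Obj = BiMag S,
     Arr = {(A, B, {u. teq S t u}) | A B t. typed S t A B},
     Dom = fst,
     Cod = (\<lambda>f. fst (snd f)),
     Idt = (\<lambda>A. (A, A, {u. teq S (TId A) u})),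
     Cmp = (\<lambda>g f. (fst f, fst (snd g),
              {u. teq S (TComp (SOME t. t \<in> snd (snd g)) (SOME t. t \<in> snd (snd f))) u})) \<rparr>"

definition sorted_ccc ::
  "'a set \<Rightarrow> ('a bimag, 'm) cat \<Rightarrow> ('a bimag \<times> 'a bimag \<times> 'a tm set \<Rightarrow> 'm) \<Rightarrow> bool" where
  "sorted_ccc S Ct \<iota> \<longleftrightarrow> cartesian_closed Ct \<and> Obj Ct = BiMag S \<and>
     cc_functor (CFam S) Ct (\<lambda>A. A) \<iota>"

end

theory Submission
  imports Defs
begin

lemma hom_iff: "f \<in> hom C a b \<longleftrightarrow> f \<in> Arr C \<and> Dom C f = a \<and> Cod C f = b"
  by (simp add: hom_def)

locale cat = fixes C :: "('o, 'm) cat" assumes cat: "category C"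
begin

lemmas ax1 = cat[unfolded category_def, THEN conjunct1]
lemmas ax2 = cat[unfolded category_def, THEN conjunct2, THEN conjunct1]
lemmas ax3 = cat[unfolded category_def, THEN conjunct2, THEN conjunct2, THEN conjunct1]
lemmas ax4 = cat[unfolded category_def, THEN conjunct2, THEN conjunct2, THEN conjunct2, THEN conjunct1]
lemmas ax5 = cat[unfolded category_def, THEN conjunct2, THEN conjunct2, THEN conjunct2, THEN conjunct2]

lemma hom_objs: "f \<in> hom C a b \<Longrightarrow> a \<in> Obj C \<and> b \<in> Obj C"
  using ax1 unfolding hom_def by auto

lemma comp_hom: "f \<in> hom C a b \<Longrightarrow> g \<in> hom C b c \<Longrightarrow> Cmp C g f \<in> hom C a c"
  using ax3[rule_format, of f g] unfolding hom_def by auto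

lemma id_hom: "a \<in> Obj C \<Longrightarrow> Idt C a \<in> hom C a a"
  using ax2 by auto

lemma idl: "f \<in> hom C a b \<Longrightarrow> Cmp C (Idt C b) f = f"
  using ax4[rule_format, of f] unfolding hom_def by auto

lemma idr: "f \<in> hom C a b \<Longrightarrow> Cmp C f (Idt C a) = f"
  using ax4[rule_format, of f] unfolding hom_def by auto

lemma assoc: "f \<in> hom C a b \<Longrightarrow> g \<in> hom C b c \<Longrightarrow> h \<in> hom C c d \<Longrightarrow>
   Cmp C h (Cmp C g f) = Cmp C (Cmp C h g) f"
  using ax5[rule_format, of f g h] unfolding hom_def by auto

lemma isoI: "f \<in> hom C a b \<Longrightarrow> g \<in> hom C b a \<Longrightarrow> Cmp C g f = Idt C a \<Longrightarrow> Cmp C f g = Idt C b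
  \<Longrightarrow> is_iso C f"
  unfolding is_iso_def hom_def by auto

lemma isoE: "is_iso C f \<Longrightarrow> f \<in> hom C a b \<Longrightarrow>
  (\<And>g. g \<in> hom C b a \<Longrightarrow> Cmp C g f = Idt C a \<Longrightarrow> Cmp C f g = Idt C b \<Longrightarrow> P) \<Longrightarrow> P"
  unfolding is_iso_def hom_def by auto

lemma cancel_l: "i \<in> hom C b c \<Longrightarrow> is_iso C i \<Longrightarrow> h \<in> hom C a b \<Longrightarrow> h' \<in> hom C a b \<Longrightarrow>
   Cmp C i h = Cmp C i h' \<Longrightarrow> h = h'"
proof -
  assume i: "i \<in> hom C b c" "is_iso C i" and h: "h \<in> hom C a b" "h' \<in> hom C a b"
    and e: "Cmp C i h = Cmp C i h'"
  obtain j where j: "j \<in> hom C c b" "Cmp C j i = Idt C b" using isoE[OF i(2) i(1)] by blast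
  have "h = Cmp C (Cmp C j i) h" using j idl h by simp
  also have "\<dots> = Cmp C j (Cmp C i h)" using assoc[OF h(1) i(1) j(1)] by simp
  also have "\<dots> = Cmp C j (Cmp C i h')" using e by simp
  also have "\<dots> = Cmp C (Cmp C j i) h'" using assoc[OF h(2) i(1) j(1)] by simp
  also have "\<dots> = h'" using j idl h by simp
  finally show ?thesis .
qed

lemma cancel_r: "j \<in> hom C a b \<Longrightarrow> is_iso C j \<Longrightarrow> h \<in> hom C b c \<Longrightarrow> h' \<in> hom C b c \<Longrightarrow>
   Cmp C h j = Cmp C h' j \<Longrightarrow> h = h'"
proof -
  assume i: "j \<in> hom C a b" "is_iso C j" and h: "h \<in> hom C b c" "h' \<in> hom C b c"
    and e: "Cmp C h j = Cmp C h' j"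
  obtain k where k: "k \<in> hom C b a" "Cmp C j k = Idt C b" using isoE[OF i(2) i(1)] by blast
  have "h = Cmp C h (Cmp C j k)" using k idr h by simp
  also have "\<dots> = Cmp C (Cmp C h j) k" using assoc[OF k(1) i(1) h(1)] by simp
  also have "\<dots> = Cmp C (Cmp C h' j) k" using e by simp
  also have "\<dots> = Cmp C h' (Cmp C j k)" using assoc[OF k(1) i(1) h(2)] by simp
  also have "\<dots> = h'" using k idr h by simp
  finally show ?thesis .
qed

end

lemma prodI:
  assumes "p \<in> Obj C" "p1 \<in> hom C p a" "p2 \<in> hom C p b"
    and "\<And>c f g. f \<in> hom C c a \<Longrightarrow> g \<in> hom C c b \<Longrightarrow> \<exists>h \<in> hom C c p. Cmp C p1 h = f \<and> Cmp C p2 h = g"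
    and "\<And>c h h'. h \<in> hom C c p \<Longrightarrow> h' \<in> hom C c p \<Longrightarrow> Cmp C p1 h = Cmp C p1 h' \<Longrightarrow>
             Cmp C p2 h = Cmp C p2 h' \<Longrightarrow> h = h'"
  shows "is_product C a b p p1 p2"
  unfolding is_product_def using assms by metis

lemma prod_hom: "is_product C a b p p1 p2 \<Longrightarrow> p \<in> Obj C \<and> p1 \<in> hom C p a \<and> p2 \<in> hom C p b"
  unfolding is_product_def by blast

lemma prod_o: "is_product C a b p p1 p2 \<Longrightarrow> p \<in> Obj C" by (drule prod_hom) simp
lemma prod_p1: "is_product C a b p p1 p2 \<Longrightarrow> p1 \<in> hom C p a" by (drule prod_hom) simp
lemma prod_p2: "is_product C a b p p1 p2 \<Longrightarrow> p2 \<in> hom C p b" by (drule prod_hom) simp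

context cat begin

lemma prod_ex: "is_product C a b p p1 p2 \<Longrightarrow> f \<in> hom C c a \<Longrightarrow> g \<in> hom C c b \<Longrightarrow>
   \<exists>h \<in> hom C c p. Cmp C p1 h = f \<and> Cmp C p2 h = g"
  unfolding is_product_def using hom_objs by metis

lemma prod_uniq: "is_product C a b p p1 p2 \<Longrightarrow> h \<in> hom C c p \<Longrightarrow> h' \<in> hom C c p \<Longrightarrow>
   Cmp C p1 h = Cmp C p1 h' \<Longrightarrow> Cmp C p2 h = Cmp C p2 h' \<Longrightarrow> h = h'"
proof -
  assume P: "is_product C a b p p1 p2" and h: "h \<in> hom C c p" "h' \<in> hom C c p"
    and e: "Cmp C p1 h = Cmp C p1 h'" "Cmp C p2 h = Cmp C p2 h'"
  have c: "c \<in> Obj C" using h hom_objs by blast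
  have f: "Cmp C p1 h \<in> hom C c a" "Cmp C p2 h \<in> hom C c b"
    using comp_hom[OF h(1) prod_p1[OF P]] comp_hom[OF h(1) prod_p2[OF P]] by auto
  from P c f have "\<exists>!k. k \<in> hom C c p \<and> Cmp C p1 k = Cmp C p1 h \<and> Cmp C p2 k = Cmp C p2 h"
    unfolding is_product_def by blast
  then show "h = h'" using h e by metis
qed

lemma prod_iso:
  assumes P: "is_product C a b p p1 p2" and Q: "is_product C a b q q1 q2"
  shows "\<exists>i \<in> hom C q p. is_iso C i \<and> Cmp C p1 i = q1 \<and> Cmp C p2 i = q2"
proof -
  have ph: "p \<in> Obj C" "p1 \<in> hom C p a" "p2 \<in> hom C p b" using prod_hom[OF P] by auto
  have qh: "q \<in> Obj C" "q1 \<in> hom C q a" "q2 \<in> hom C q b" using prod_hom[OF Q] by auto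
  obtain i where i: "i \<in> hom C q p" "Cmp C p1 i = q1" "Cmp C p2 i = q2"
    using prod_ex[OF P qh(2,3)] by blast
  obtain j where j: "j \<in> hom C p q" "Cmp C q1 j = p1" "Cmp C q2 j = p2"
    using prod_ex[OF Q ph(2,3)] by blast
  have "Cmp C i j = Idt C p"
  proof (rule prod_uniq[OF P comp_hom[OF j(1) i(1)] id_hom[OF ph(1)]])
    show "Cmp C p1 (Cmp C i j) = Cmp C p1 (Idt C p)"
      using assoc[OF j(1) i(1) ph(2)] i j idr[OF ph(2)] by simp
    show "Cmp C p2 (Cmp C i j) = Cmp C p2 (Idt C p)"
      using assoc[OF j(1) i(1) ph(3)] i j idr[OF ph(3)] by simp
  qed
  moreover have "Cmp C j i = Idt C q"
  proof (rule prod_uniq[OF Q comp_hom[OF i(1) j(1)] id_hom[OF qh(1)]])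
    show "Cmp C q1 (Cmp C j i) = Cmp C q1 (Idt C q)"
      using assoc[OF i(1) j(1) qh(2)] i j idr[OF qh(2)] by simp
    show "Cmp C q2 (Cmp C j i) = Cmp C q2 (Idt C q)"
      using assoc[OF i(1) j(1) qh(3)] i j idr[OF qh(3)] by simp
  qed
  ultimately show ?thesis using i j isoI by blast
qed

lemma prod_transfer:
  assumes P: "is_product C a b p p1 p2" and i: "i \<in> hom C q p" "is_iso C i"
  shows "is_product C a b q (Cmp C p1 i) (Cmp C p2 i)"
proof -
  obtain j where j: "j \<in> hom C p q" "Cmp C j i = Idt C q" "Cmp C i j = Idt C p"
    using isoE[OF i(2) i(1)] by blast
  have pq: "p1 \<in> hom C p a" "p2 \<in> hom C p b" using prod_hom[OF P] by auto
  show ?thesis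
  proof (rule prodI)
    show "q \<in> Obj C" using i hom_objs by blast
    show "Cmp C p1 i \<in> hom C q a" "Cmp C p2 i \<in> hom C q b" using comp_hom[OF i(1) pq(1)] comp_hom[OF i(1) pq(2)] by auto
  next
    fix c f g assume f: "f \<in> hom C c a" "g \<in> hom C c b"
    obtain h where h: "h \<in> hom C c p" "Cmp C p1 h = f" "Cmp C p2 h = g"
      using prod_ex[OF P f] by blast
    have jh: "Cmp C j h \<in> hom C c q" using comp_hom[OF h(1) j(1)] .
    have ijh: "Cmp C i (Cmp C j h) = h" using assoc[OF h(1) j(1) i(1)] j(3) idl[OF h(1)] by simp
    have "Cmp C (Cmp C p1 i) (Cmp C j h) = f"
      using assoc[OF jh i(1) pq(1)] ijh h by simp
    moreover have "Cmp C (Cmp C p2 i) (Cmp C j h) = g"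
      using assoc[OF jh i(1) pq(2)] ijh h by simp
    ultimately show "\<exists>h \<in> hom C c q. Cmp C (Cmp C p1 i) h = f \<and> Cmp C (Cmp C p2 i) h = g" using jh by blast
  next
    fix c h h' assume h: "h \<in> hom C c q" "h' \<in> hom C c q"
      and e: "Cmp C (Cmp C p1 i) h = Cmp C (Cmp C p1 i) h'" "Cmp C (Cmp C p2 i) h = Cmp C (Cmp C p2 i) h'"
    have "Cmp C i h = Cmp C i h'"
    proof (rule prod_uniq[OF P comp_hom[OF h(1) i(1)] comp_hom[OF h(2) i(1)]])
      show "Cmp C p1 (Cmp C i h) = Cmp C p1 (Cmp C i h')"
        using e assoc[OF h(1) i(1) pq(1)] assoc[OF h(2) i(1) pq(1)] by simp
      show "Cmp C p2 (Cmp C i h) = Cmp C p2 (Cmp C i h')"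
        using e assoc[OF h(1) i(1) pq(2)] assoc[OF h(2) i(1) pq(2)] by simp
    qed
    then show "h = h'" using cancel_l i h by blast
  qed
qed

lemma term_transfer:
  assumes T: "is_terminal C t" and i: "i \<in> hom C t' t" "is_iso C i"
  shows "is_terminal C t'"
proof -
  obtain j where j: "j \<in> hom C t t'" "Cmp C j i = Idt C t'" "Cmp C i j = Idt C t"
    using isoE[OF i(2) i(1)] by blast
  have "t' \<in> Obj C" using i hom_objs by blast
  moreover have "\<exists>!f. f \<in> hom C a t'" if a: "a \<in> Obj C" for a
  proof -
    obtain k where k: "k \<in> hom C a t" using T a unfolding is_terminal_def by blast
    have u: "\<And>f g. f \<in> hom C a t \<Longrightarrow> g \<in> hom C a t \<Longrightarrow> f = g"
      using T a unfolding is_terminal_def by blast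
    show ?thesis
    proof
      show "Cmp C j k \<in> hom C a t'" using comp_hom[OF k j(1)] .
    next
      fix f assume f: "f \<in> hom C a t'"
      have "Cmp C i f = Cmp C i (Cmp C j k)"
        by (rule u[OF comp_hom[OF f i(1)] comp_hom[OF comp_hom[OF k j(1)] i(1)]])
      then show "f = Cmp C j k" using cancel_l[OF i(1) i(2) f comp_hom[OF k j(1)]] by blast
    qed
  qed
  ultimately show ?thesis unfolding is_terminal_def by blast
qed

lemma term_iso:
  assumes T: "is_terminal C t" and T': "is_terminal C t'"
  shows "\<exists>i \<in> hom C t' t. is_iso C i"
proof -
  have o: "t \<in> Obj C" "t' \<in> Obj C" using T T' unfolding is_terminal_def by blast+
  obtain i where i: "i \<in> hom C t' t" using T o unfolding is_terminal_def by blast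
  obtain j where j: "j \<in> hom C t t'" using T' o unfolding is_terminal_def by blast
  have u: "\<And>a f g. a \<in> Obj C \<Longrightarrow> f \<in> hom C a t \<Longrightarrow> g \<in> hom C a t \<Longrightarrow> f = g"
    using T unfolding is_terminal_def by blast
  have u': "\<And>a f g. a \<in> Obj C \<Longrightarrow> f \<in> hom C a t' \<Longrightarrow> g \<in> hom C a t' \<Longrightarrow> f = g"
    using T' unfolding is_terminal_def by blast
  have "Cmp C j i = Idt C t'" by (rule u'[OF o(2) comp_hom[OF i j] id_hom[OF o(2)]])
  moreover have "Cmp C i j = Idt C t" by (rule u[OF o(1) comp_hom[OF j i] id_hom[OF o(1)]])
  ultimately show ?thesis using i j isoI by blast
qed

end

definition xarr :: "('o, 'm) cat \<Rightarrow> 'o \<Rightarrow> 'm \<Rightarrow> 'm \<Rightarrow> 'o \<Rightarrow> 'm \<Rightarrow> 'm \<Rightarrow> 'm \<Rightarrow> 'm" where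
  "xarr C p p1 p2 q q1 q2 g = (THE h. h \<in> hom C q p \<and> Cmp C p1 h = Cmp C g q1 \<and> Cmp C p2 h = q2)"

context cat begin

lemma xarr:
  assumes P: "is_product C e x p p1 p2" and Q: "is_product C c x q q1 q2" and g: "g \<in> hom C c e"
  shows "xarr C p p1 p2 q q1 q2 g \<in> hom C q p \<and> Cmp C p1 (xarr C p p1 p2 q q1 q2 g) = Cmp C g q1
     \<and> Cmp C p2 (xarr C p p1 p2 q q1 q2 g) = q2"
proof -
  have a: "Cmp C g q1 \<in> hom C q e" "q2 \<in> hom C q x" using comp_hom[OF prod_p1[OF Q] g] prod_p2[OF Q] by auto
  obtain h where h: "h \<in> hom C q p" "Cmp C p1 h = Cmp C g q1" "Cmp C p2 h = q2"
    using prod_ex[OF P a] by blast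
  have "\<exists>!h. h \<in> hom C q p \<and> Cmp C p1 h = Cmp C g q1 \<and> Cmp C p2 h = q2"
    using h prod_uniq[OF P] by metis
  then show ?thesis unfolding xarr_def by (rule theI')
qed

lemma xarr_uniq:
  assumes P: "is_product C e x p p1 p2" and Q: "is_product C c x q q1 q2" and g: "g \<in> hom C c e"
    and h: "h \<in> hom C q p" "Cmp C p1 h = Cmp C g q1" "Cmp C p2 h = q2"
  shows "h = xarr C p p1 p2 q q1 q2 g"
  using xarr[OF P Q g] h prod_uniq[OF P] by metis

lemma xarr_comp:
  assumes P: "is_product C e x p p1 p2" and Q: "is_product C d x q q1 q2"
    and R: "is_product C c x r r1 r2" and g: "g \<in> hom C d e" and k: "k \<in> hom C c d"
  shows "Cmp C (xarr C p p1 p2 q q1 q2 g) (xarr C q q1 q2 r r1 r2 k) = xarr C p p1 p2 r r1 r2 (Cmp C g k)"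
proof -
  note X1 = xarr[OF P Q g] and X2 = xarr[OF Q R k]
  have ph: "p1 \<in> hom C p e" "p2 \<in> hom C p x" "q1 \<in> hom C q d" "q2 \<in> hom C q x" "r1 \<in> hom C r c"
    using prod_hom[OF P] prod_hom[OF Q] prod_hom[OF R] by auto
  show ?thesis
  proof (rule xarr_uniq[OF P R comp_hom[OF k g]])
    show "Cmp C (xarr C p p1 p2 q q1 q2 g) (xarr C q q1 q2 r r1 r2 k) \<in> hom C r p"
      using comp_hom[OF X2[THEN conjunct1] X1[THEN conjunct1]] .
    have "Cmp C p1 (Cmp C (xarr C p p1 p2 q q1 q2 g) (xarr C q q1 q2 r r1 r2 k))
        = Cmp C (Cmp C p1 (xarr C p p1 p2 q q1 q2 g)) (xarr C q q1 q2 r r1 r2 k)"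
      using assoc[OF X2[THEN conjunct1] X1[THEN conjunct1] ph(1)] by simp
    also have "\<dots> = Cmp C (Cmp C g q1) (xarr C q q1 q2 r r1 r2 k)" using X1 by simp
    also have "\<dots> = Cmp C g (Cmp C q1 (xarr C q q1 q2 r r1 r2 k))"
      using assoc[OF X2[THEN conjunct1] ph(3) g] by simp
    also have "\<dots> = Cmp C g (Cmp C k r1)" using X2 by simp
    also have "\<dots> = Cmp C (Cmp C g k) r1" using assoc[OF ph(5) k g] by simp
    finally show "Cmp C p1 (Cmp C (xarr C p p1 p2 q q1 q2 g) (xarr C q q1 q2 r r1 r2 k)) = Cmp C (Cmp C g k) r1" .
    have "Cmp C p2 (Cmp C (xarr C p p1 p2 q q1 q2 g) (xarr C q q1 q2 r r1 r2 k))
        = Cmp C (Cmp C p2 (xarr C p p1 p2 q q1 q2 g)) (xarr C q q1 q2 r r1 r2 k)"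
      using assoc[OF X2[THEN conjunct1] X1[THEN conjunct1] ph(2)] by simp
    also have "\<dots> = r2" using X1 X2 by simp
    finally show "Cmp C p2 (Cmp C (xarr C p p1 p2 q q1 q2 g) (xarr C q q1 q2 r r1 r2 k)) = r2" .
  qed
qed

lemma xarr_id:
  assumes P: "is_product C e x p p1 p2"
  shows "xarr C p p1 p2 p p1 p2 (Idt C e) = Idt C p"
proof -
  have ph: "p \<in> Obj C" "p1 \<in> hom C p e" "p2 \<in> hom C p x" using prod_hom[OF P] by auto
  have "e \<in> Obj C" using ph hom_objs by blast
  then show ?thesis
    using xarr_uniq[OF P P id_hom[of e]] ph id_hom idl idr by metis
qed

lemma exp_prod: "is_exponential C x y e p p1 p2 ev \<Longrightarrow> is_product C e x p p1 p2 \<and> ev \<in> hom C p y"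
  unfolding is_exponential_def by blast

lemma exp_ex:
  assumes E: "is_exponential C x y e p p1 p2 ev" and Q: "is_product C c x q q1 q2" and f: "f \<in> hom C q y"
  shows "\<exists>g \<in> hom C c e. Cmp C ev (xarr C p p1 p2 q q1 q2 g) = f"
proof -
  have P: "is_product C e x p p1 p2" using E exp_prod by blast
  obtain g where g: "g \<in> hom C c e" "\<forall>h. h \<in> hom C q p \<and> Cmp C p1 h = Cmp C g q1 \<and> Cmp C p2 h = q2
                \<longrightarrow> Cmp C ev h = f"
    using E[unfolded is_exponential_def, THEN conjunct2, THEN conjunct2, rule_format, of c q q1 q2 f] Q f
    by blast
  then show ?thesis using xarr[OF P Q g(1)] by blast
qed

lemma exp_uniq:
  assumes E: "is_exponential C x y e p p1 p2 ev" and Q: "is_product C c x q q1 q2"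
    and g: "g \<in> hom C c e" "g' \<in> hom C c e"
    and eq: "Cmp C ev (xarr C p p1 p2 q q1 q2 g) = Cmp C ev (xarr C p p1 p2 q q1 q2 g')"
  shows "g = g'"
proof -
  have P: "is_product C e x p p1 p2" and ev: "ev \<in> hom C p y" using E exp_prod by blast+
  let ?f = "Cmp C ev (xarr C p p1 p2 q q1 q2 g)"
  have f: "?f \<in> hom C q y" using comp_hom[OF xarr[OF P Q g(1), THEN conjunct1] ev] .
  have "\<exists>!g. g \<in> hom C c e \<and> (\<forall>h. h \<in> hom C q p \<and> Cmp C p1 h = Cmp C g q1 \<and> Cmp C p2 h = q2
                \<longrightarrow> Cmp C ev h = ?f)"
    using E[unfolded is_exponential_def, THEN conjunct2, THEN conjunct2, rule_format, of c q q1 q2 ?f] Q f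
    by blast
  moreover have "\<forall>h. h \<in> hom C q p \<and> Cmp C p1 h = Cmp C g q1 \<and> Cmp C p2 h = q2 \<longrightarrow> Cmp C ev h = ?f"
    using xarr_uniq[OF P Q g(1)] by metis
  moreover have "\<forall>h. h \<in> hom C q p \<and> Cmp C p1 h = Cmp C g' q1 \<and> Cmp C p2 h = q2 \<longrightarrow> Cmp C ev h = ?f"
    using xarr_uniq[OF P Q g(2)] eq by metis
  ultimately show ?thesis using g by blast
qed

lemma expI:
  assumes P: "is_product C e x p p1 p2" and ev: "ev \<in> hom C p y"
    and ex: "\<And>c q q1 q2 f. is_product C c x q q1 q2 \<Longrightarrow> f \<in> hom C q y \<Longrightarrow>
              \<exists>g \<in> hom C c e. Cmp C ev (xarr C p p1 p2 q q1 q2 g) = f"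
    and un: "\<And>c q q1 q2 g g'. is_product C c x q q1 q2 \<Longrightarrow> g \<in> hom C c e \<Longrightarrow> g' \<in> hom C c e \<Longrightarrow>
              Cmp C ev (xarr C p p1 p2 q q1 q2 g) = Cmp C ev (xarr C p p1 p2 q q1 q2 g') \<Longrightarrow> g = g'"
  shows "is_exponential C x y e p p1 p2 ev"
  unfolding is_exponential_def
proof (intro conjI P ev allI impI)
  fix c q q1 q2 f assume a: "is_product C c x q q1 q2 \<and> f \<in> hom C q y"
  then obtain g where g: "g \<in> hom C c e" "Cmp C ev (xarr C p p1 p2 q q1 q2 g) = f" using ex by blast
  have iff: "\<And>g. g \<in> hom C c e \<Longrightarrow> (\<forall>h. h \<in> hom C q p \<and> Cmp C p1 h = Cmp C g q1 \<and> Cmp C p2 h = q2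
      \<longrightarrow> Cmp C ev h = f) \<longleftrightarrow> Cmp C ev (xarr C p p1 p2 q q1 q2 g) = f"
    using xarr[OF P] xarr_uniq[OF P] a by metis
  show "\<exists>!g. g \<in> hom C c e \<and> (\<forall>h. h \<in> hom C q p \<and> Cmp C p1 h = Cmp C g q1 \<and> Cmp C p2 h = q2
      \<longrightarrow> Cmp C ev h = f)"
  proof
    show "g \<in> hom C c e \<and> (\<forall>h. h \<in> hom C q p \<and> Cmp C p1 h = Cmp C g q1 \<and> Cmp C p2 h = q2
      \<longrightarrow> Cmp C ev h = f)" using g iff by blast
  next
    fix g' assume "g' \<in> hom C c e \<and> (\<forall>h. h \<in> hom C q p \<and> Cmp C p1 h = Cmp C g' q1 \<and> Cmp C p2 h = q2
      \<longrightarrow> Cmp C ev h = f)"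
    then show "g' = g" using iff un a g by metis
  qed
qed

end


lemma functor_cats: "functor C D Fo Fm \<Longrightarrow> cat C \<and> cat D"
  unfolding functor_def cat_def by blast

lemma functor_hom: "functor C D Fo Fm \<Longrightarrow> f \<in> hom C a b \<Longrightarrow> Fm f \<in> hom D (Fo a) (Fo b)"
  unfolding functor_def hom_def by blast

lemma functor_comp: "functor C D Fo Fm \<Longrightarrow> f \<in> hom C a b \<Longrightarrow> g \<in> hom C b c \<Longrightarrow>
   Fm (Cmp C g f) = Cmp D (Fm g) (Fm f)"
  unfolding functor_def hom_def by auto

lemma functor_id: "functor C D Fo Fm \<Longrightarrow> a \<in> Obj C \<Longrightarrow> Fm (Idt C a) = Idt D (Fo a)"
  unfolding functor_def by blast

lemma functor_iso:
  assumes F: "functor C D Fo Fm" and f: "f \<in> hom C a b" "is_iso C f"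
  shows "is_iso D (Fm f)"
proof -
  interpret C: cat C using functor_cats[OF F] by blast
  interpret D: cat D using functor_cats[OF F] by blast
  obtain g where g: "g \<in> hom C b a" "Cmp C g f = Idt C a" "Cmp C f g = Idt C b"
    using C.isoE[OF f(2) f(1)] by blast
  have o: "a \<in> Obj C" "b \<in> Obj C" using f C.hom_objs by blast+
  show ?thesis
    apply (rule D.isoI[OF functor_hom[OF F f(1)] functor_hom[OF F g(1)]])
    using functor_comp[OF F f(1) g(1)] functor_comp[OF F g(1) f(1)] functor_id[OF F o(1)]
      functor_id[OF F o(2)] g by simp_all
qed

lemma functor_xarr:
  assumes F: "functor C D Fo Fm" and P: "is_product C e x p p1 p2" and Q: "is_product C c x q q1 q2"
    and g: "g \<in> hom C c e"
    and P': "is_product D (Fo e) (Fo x) (Fo p) (Fm p1) (Fm p2)"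
    and Q': "is_product D (Fo c) (Fo x) (Fo q) (Fm q1) (Fm q2)"
  shows "Fm (xarr C p p1 p2 q q1 q2 g) = xarr D (Fo p) (Fm p1) (Fm p2) (Fo q) (Fm q1) (Fm q2) (Fm g)"
proof -
  interpret C: cat C using functor_cats[OF F] by blast
  interpret D: cat D using functor_cats[OF F] by blast
  note X = C.xarr[OF P Q g]
  have ph: "p1 \<in> hom C p e" "p2 \<in> hom C p x" "q1 \<in> hom C q c" "q2 \<in> hom C q x"
    using prod_hom[OF P] prod_hom[OF Q] by auto
  show ?thesis
    apply (rule D.xarr_uniq[OF P' Q' functor_hom[OF F g]])
    using functor_hom[OF F X[THEN conjunct1]] functor_comp[OF F X[THEN conjunct1] ph(1)]
      functor_comp[OF F X[THEN conjunct1] ph(2)] functor_comp[OF F ph(3) g] X by simp_all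
qed

lemma preserve_terminal:
  assumes F: "functor C D Fo Fm" and T0: "is_terminal C t0" "is_terminal D (Fo t0)"
    and T: "is_terminal C t"
  shows "is_terminal D (Fo t)"
proof -
  interpret C: cat C using functor_cats[OF F] by blast
  interpret D: cat D using functor_cats[OF F] by blast
  obtain i where "i \<in> hom C t t0" "is_iso C i" using C.term_iso[OF T0(1) T] by blast
  then show ?thesis using D.term_transfer[OF T0(2) functor_hom[OF F] functor_iso[OF F]] by blast
qed

lemma preserve_product:
  assumes F: "functor C D Fo Fm" and P0: "is_product C a b P \<pi>1 \<pi>2"
    "is_product D (Fo a) (Fo b) (Fo P) (Fm \<pi>1) (Fm \<pi>2)"
    and Pr: "is_product C a b p p1 p2"
  shows "is_product D (Fo a) (Fo b) (Fo p) (Fm p1) (Fm p2)"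
proof -
  interpret C: cat C using functor_cats[OF F] by blast
  interpret D: cat D using functor_cats[OF F] by blast
  obtain i where i: "i \<in> hom C p P" "is_iso C i" "Cmp C \<pi>1 i = p1" "Cmp C \<pi>2 i = p2"
    using C.prod_iso[OF P0(1) Pr] by blast
  have "Fm p1 = Cmp D (Fm \<pi>1) (Fm i)" "Fm p2 = Cmp D (Fm \<pi>2) (Fm i)"
    using i functor_comp[OF F i(1) prod_p1[OF P0(1)]] functor_comp[OF F i(1) prod_p2[OF P0(1)]] by simp_all
  then show ?thesis
    using D.prod_transfer[OF P0(2) functor_hom[OF F i(1)] functor_iso[OF F i(1,2)]] by simp
qed

lemma (in cat) exp_iso:
  assumes E: "is_exponential C x y E P \<pi>1 \<pi>2 ev" and e: "is_exponential C x y e p p1 p2 ev'"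
  shows "\<exists>i \<in> hom C e E. is_iso C i \<and> Cmp C ev (xarr C P \<pi>1 \<pi>2 p p1 p2 i) = ev'"
proof -
  have PP: "is_product C E x P \<pi>1 \<pi>2" "ev \<in> hom C P y" using E exp_prod by blast+
  have pp: "is_product C e x p p1 p2" "ev' \<in> hom C p y" using e exp_prod by blast+
  obtain i where i: "i \<in> hom C e E" "Cmp C ev (xarr C P \<pi>1 \<pi>2 p p1 p2 i) = ev'"
    using exp_ex[OF E pp] by blast
  obtain j where j: "j \<in> hom C E e" "Cmp C ev' (xarr C p p1 p2 P \<pi>1 \<pi>2 j) = ev"
    using exp_ex[OF e PP] by blast
  have o: "E \<in> Obj C" "e \<in> Obj C" using i hom_objs by blast+
  have "Cmp C i j = Idt C E"
  proof (rule exp_uniq[OF E PP(1) comp_hom[OF j(1) i(1)] id_hom[OF o(1)]])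
    have "Cmp C ev (xarr C P \<pi>1 \<pi>2 P \<pi>1 \<pi>2 (Cmp C i j)) =
        Cmp C ev (Cmp C (xarr C P \<pi>1 \<pi>2 p p1 p2 i) (xarr C p p1 p2 P \<pi>1 \<pi>2 j))"
      using xarr_comp[OF PP(1) pp(1) PP(1) i(1) j(1)] by simp
    also have "\<dots> = ev" using assoc[OF xarr[OF pp(1) PP(1) j(1), THEN conjunct1] xarr[OF PP(1) pp(1) i(1), THEN conjunct1] PP(2)] i j by simp
    also have "\<dots> = Cmp C ev (xarr C P \<pi>1 \<pi>2 P \<pi>1 \<pi>2 (Idt C E))"
      using xarr_id[OF PP(1)] idr[OF PP(2)] by simp
    finally show "Cmp C ev (xarr C P \<pi>1 \<pi>2 P \<pi>1 \<pi>2 (Cmp C i j)) = Cmp C ev (xarr C P \<pi>1 \<pi>2 P \<pi>1 \<pi>2 (Idt C E))" .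
  qed
  moreover have "Cmp C j i = Idt C e"
  proof (rule exp_uniq[OF e pp(1) comp_hom[OF i(1) j(1)] id_hom[OF o(2)]])
    have "Cmp C ev' (xarr C p p1 p2 p p1 p2 (Cmp C j i)) =
        Cmp C ev' (Cmp C (xarr C p p1 p2 P \<pi>1 \<pi>2 j) (xarr C P \<pi>1 \<pi>2 p p1 p2 i))"
      using xarr_comp[OF pp(1) PP(1) pp(1) j(1) i(1)] by simp
    also have "\<dots> = ev'" using assoc[OF xarr[OF PP(1) pp(1) i(1), THEN conjunct1] xarr[OF pp(1) PP(1) j(1), THEN conjunct1] pp(2)] i j by simp
    also have "\<dots> = Cmp C ev' (xarr C p p1 p2 p p1 p2 (Idt C e))"
      using xarr_id[OF pp(1)] idr[OF pp(2)] by simp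
    finally show "Cmp C ev' (xarr C p p1 p2 p p1 p2 (Cmp C j i)) = Cmp C ev' (xarr C p p1 p2 p p1 p2 (Idt C e))" .
  qed
  ultimately show ?thesis using i j isoI by blast
qed

lemma (in cat) exp_transfer:
  assumes E: "is_exponential C x y E P \<pi>1 \<pi>2 ev" and i: "i \<in> hom C e E" "is_iso C i"
    and pp: "is_product C e x p p1 p2"
  shows "is_exponential C x y e p p1 p2 (Cmp C ev (xarr C P \<pi>1 \<pi>2 p p1 p2 i))"
proof -
  have PP: "is_product C E x P \<pi>1 \<pi>2" "ev \<in> hom C P y" using E exp_prod by blast+
  obtain j where j: "j \<in> hom C E e" "Cmp C j i = Idt C e" "Cmp C i j = Idt C E"
    using isoE[OF i(2) i(1)] by blast
  note Xi = xarr[OF PP(1) pp i(1)]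
  have key: "\<And>c q q1 q2 g. is_product C c x q q1 q2 \<Longrightarrow> g \<in> hom C c e \<Longrightarrow>
      Cmp C (Cmp C ev (xarr C P \<pi>1 \<pi>2 p p1 p2 i)) (xarr C p p1 p2 q q1 q2 g)
      = Cmp C ev (xarr C P \<pi>1 \<pi>2 q q1 q2 (Cmp C i g))"
  proof -
    fix c q q1 q2 g assume Q: "is_product C c x q q1 q2" and g: "g \<in> hom C c e"
    show "?thesis c q q1 q2 g"
      using xarr_comp[OF PP(1) pp Q i(1) g] assoc[OF xarr[OF pp Q g, THEN conjunct1] Xi[THEN conjunct1] PP(2)]
      by simp
  qed
  show ?thesis
  proof (rule expI[OF pp comp_hom[OF Xi[THEN conjunct1] PP(2)]])
    fix c q q1 q2 f assume Q: "is_product C c x q q1 q2" and f: "f \<in> hom C q y"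
    obtain G where G: "G \<in> hom C c E" "Cmp C ev (xarr C P \<pi>1 \<pi>2 q q1 q2 G) = f"
      using exp_ex[OF E Q f] by blast
    have jG: "Cmp C j G \<in> hom C c e" using comp_hom[OF G(1) j(1)] .
    moreover have "Cmp C i (Cmp C j G) = G" using assoc[OF G(1) j(1) i(1)] j idl[OF G(1)] by simp
    ultimately show "\<exists>g \<in> hom C c e. Cmp C (Cmp C ev (xarr C P \<pi>1 \<pi>2 p p1 p2 i)) (xarr C p p1 p2 q q1 q2 g) = f"
      using key[OF Q jG] G by auto
  next
    fix c q q1 q2 g g' assume Q: "is_product C c x q q1 q2" and g: "g \<in> hom C c e" "g' \<in> hom C c e"
      and eq: "Cmp C (Cmp C ev (xarr C P \<pi>1 \<pi>2 p p1 p2 i)) (xarr C p p1 p2 q q1 q2 g) =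
               Cmp C (Cmp C ev (xarr C P \<pi>1 \<pi>2 p p1 p2 i)) (xarr C p p1 p2 q q1 q2 g')"
    have "Cmp C i g = Cmp C i g'"
      using exp_uniq[OF E Q comp_hom[OF g(1) i(1)] comp_hom[OF g(2) i(1)]] eq key[OF Q g(1)] key[OF Q g(2)] by simp
    then show "g = g'" using cancel_l[OF i(1) i(2) g] by blast
  qed
qed

lemma preserve_exp:
  assumes F: "functor C D Fo Fm" and E0: "is_exponential C x y E P \<pi>1 \<pi>2 ev"
    "is_exponential D (Fo x) (Fo y) (Fo E) (Fo P) (Fm \<pi>1) (Fm \<pi>2) (Fm ev)"
    and e: "is_exponential C x y e p p1 p2 ev'"
    and pp: "is_product D (Fo e) (Fo x) (Fo p) (Fm p1) (Fm p2)"
  shows "is_exponential D (Fo x) (Fo y) (Fo e) (Fo p) (Fm p1) (Fm p2) (Fm ev')"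
proof -
  interpret C: cat C using functor_cats[OF F] by blast
  interpret D: cat D using functor_cats[OF F] by blast
  obtain i where i: "i \<in> hom C e E" "is_iso C i" "Cmp C ev (xarr C P \<pi>1 \<pi>2 p p1 p2 i) = ev'"
    using C.exp_iso[OF E0(1) e] by blast
  have PP: "is_product C E x P \<pi>1 \<pi>2" "ev \<in> hom C P y" using E0 C.exp_prod by blast+
  have ppC: "is_product C e x p p1 p2" using e C.exp_prod by blast
  have PD: "is_product D (Fo E) (Fo x) (Fo P) (Fm \<pi>1) (Fm \<pi>2)" using E0(2) D.exp_prod by blast
  have "Fm ev' = Cmp D (Fm ev) (Fm (xarr C P \<pi>1 \<pi>2 p p1 p2 i))"
    using functor_comp[OF F C.xarr[OF PP(1) ppC i(1), THEN conjunct1] PP(2)] i(3) by simp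
  also have "\<dots> = Cmp D (Fm ev) (xarr D (Fo P) (Fm \<pi>1) (Fm \<pi>2) (Fo p) (Fm p1) (Fm p2) (Fm i))"
    using functor_xarr[OF F PP(1) ppC i(1) PD pp] by simp
  finally show ?thesis
    using D.exp_transfer[OF E0(2) functor_hom[OF F i(1)] functor_iso[OF F i(1,2)] pp] by simp
qed


definition Pull :: "('o, 'm) cat \<Rightarrow> ('x \<Rightarrow> 'o) \<Rightarrow> 'x set \<Rightarrow> ('x, 'x \<times> 'x \<times> 'm) cat" where
  "Pull C \<phi> X = \<lparr> Obj = X,
     Arr = {(A, B, f). A \<in> X \<and> B \<in> X \<and> f \<in> hom C (\<phi> A) (\<phi> B)},
     Dom = fst, Cod = (\<lambda>f. fst (snd f)),
     Idt = (\<lambda>A. (A, A, Idt C (\<phi> A))),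
     Cmp = (\<lambda>g f. (fst f, fst (snd g), Cmp C (snd (snd g)) (snd (snd f)))) \<rparr>"

lemma Pull_simps[simp]:
  "Obj (Pull C \<phi> X) = X"
  "Idt (Pull C \<phi> X) A = (A, A, Idt C (\<phi> A))"
  "Cmp (Pull C \<phi> X) (B', D, g) (A, B, f) = (A, D, Cmp C g f)"
  "Dom (Pull C \<phi> X) (A, B, f) = A"
  "Cod (Pull C \<phi> X) (A, B, f) = B"
  unfolding Pull_def by simp_all

lemma hom_Pull: "(A', B', f) \<in> hom (Pull C \<phi> X) A B \<longleftrightarrow>
    A' = A \<and> B' = B \<and> A \<in> X \<and> B \<in> X \<and> f \<in> hom C (\<phi> A) (\<phi> B)"
  unfolding Pull_def hom_def by auto

lemma hom_PullE: "u \<in> hom (Pull C \<phi> X) A B \<Longrightarrow> (\<And>f. u = (A, B, f) \<Longrightarrow> A \<in> X \<Longrightarrow> B \<in> X \<Longrightarrow>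
    f \<in> hom C (\<phi> A) (\<phi> B) \<Longrightarrow> P) \<Longrightarrow> P"
  by (cases u) (auto simp: hom_Pull)

locale pull = cat C for C :: "('o, 'm) cat" +
  fixes \<phi> :: "'x \<Rightarrow> 'o" and X :: "'x set"
  assumes phi: "\<phi> ` X = Obj C"
begin

lemma cat_Pull: "category (Pull C \<phi> X)"
proof -
  have "\<And>f. f \<in> Arr (Pull C \<phi> X) \<longleftrightarrow> (\<exists>A B. f \<in> hom (Pull C \<phi> X) A B)"
    unfolding hom_def by blast
  show ?thesis unfolding category_def
  proof (intro conjI ballI allI impI)
    fix f assume "f \<in> Arr (Pull C \<phi> X)"
    then show "Dom (Pull C \<phi> X) f \<in> Obj (Pull C \<phi> X)" "Cod (Pull C \<phi> X) f \<in> Obj (Pull C \<phi> X)"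
      unfolding Pull_def by auto
  next
    fix a assume "a \<in> Obj (Pull C \<phi> X)"
    then show "Idt (Pull C \<phi> X) a \<in> hom (Pull C \<phi> X) a a"
      using phi id_hom by (auto simp: hom_Pull)
  next
    fix f g assume "f \<in> Arr (Pull C \<phi> X) \<and> g \<in> Arr (Pull C \<phi> X) \<and> Cod (Pull C \<phi> X) f = Dom (Pull C \<phi> X) g"
    then show "Cmp (Pull C \<phi> X) g f \<in> hom (Pull C \<phi> X) (Dom (Pull C \<phi> X) f) (Cod (Pull C \<phi> X) g)"
      unfolding Pull_def hom_def using comp_hom[unfolded hom_def] by auto
  next
    fix f assume "f \<in> Arr (Pull C \<phi> X)"
    then show "Cmp (Pull C \<phi> X) (Idt (Pull C \<phi> X) (Cod (Pull C \<phi> X) f)) f = f"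
       "Cmp (Pull C \<phi> X) f (Idt (Pull C \<phi> X) (Dom (Pull C \<phi> X) f)) = f"
      unfolding Pull_def using idl idr by auto
  next
    fix f g h assume "f \<in> Arr (Pull C \<phi> X) \<and> g \<in> Arr (Pull C \<phi> X) \<and> h \<in> Arr (Pull C \<phi> X) \<and>
       Cod (Pull C \<phi> X) f = Dom (Pull C \<phi> X) g \<and> Cod (Pull C \<phi> X) g = Dom (Pull C \<phi> X) h"
    then show "Cmp (Pull C \<phi> X) h (Cmp (Pull C \<phi> X) g f) = Cmp (Pull C \<phi> X) (Cmp (Pull C \<phi> X) h g) f"
      unfolding Pull_def using assoc by auto
  qed
qed

sublocale P: cat "Pull C \<phi> X" using cat_Pull by unfold_locales

lemma phiX: "A \<in> X \<Longrightarrow> \<phi> A \<in> Obj C" using phi by blast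

lemma phi_surj: "c \<in> Obj C \<Longrightarrow> (\<And>c'. c' \<in> X \<Longrightarrow> c = \<phi> c' \<Longrightarrow> R) \<Longrightarrow> R"
  using phi by blast

lemma terminal_alt: "is_terminal D t \<longleftrightarrow> t \<in> Obj D \<and> (\<forall>a \<in> Obj D. \<exists>f. f \<in> hom D a t) \<and>
   (\<forall>a \<in> Obj D. \<forall>f g. f \<in> hom D a t \<and> g \<in> hom D a t \<longrightarrow> f = g)"
  unfolding is_terminal_def by blast

lemma Pull_terminal:
  assumes T: "T \<in> X"
  shows "is_terminal (Pull C \<phi> X) T \<longleftrightarrow> is_terminal C (\<phi> T)"
proof
  assume H: "is_terminal (Pull C \<phi> X) T"
  have ex: "\<And>a. a \<in> X \<Longrightarrow> \<exists>u. u \<in> hom (Pull C \<phi> X) a T"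
    and un: "\<And>a u v. a \<in> X \<Longrightarrow> u \<in> hom (Pull C \<phi> X) a T \<Longrightarrow> v \<in> hom (Pull C \<phi> X) a T \<Longrightarrow> u = v"
    using H unfolding terminal_alt by auto
  show "is_terminal C (\<phi> T)" unfolding terminal_alt
  proof (intro conjI ballI allI impI)
    show "\<phi> T \<in> Obj C" using phiX T by blast
  next
    fix a assume a: "a \<in> Obj C"
    then obtain a' where a': "a' \<in> X" "a = \<phi> a'" using phi_surj by metis
    then obtain u where "u \<in> hom (Pull C \<phi> X) a' T" using ex by blast
    then show "\<exists>f. f \<in> hom C a (\<phi> T)" using a' by (auto elim: hom_PullE)
  next
    fix a f g assume a: "a \<in> Obj C" and fg: "f \<in> hom C a (\<phi> T) \<and> g \<in> hom C a (\<phi> T)"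
    then obtain a' where a': "a' \<in> X" "a = \<phi> a'" using phi_surj by metis
    have "(a', T, f) \<in> hom (Pull C \<phi> X) a' T" "(a', T, g) \<in> hom (Pull C \<phi> X) a' T"
      using a' T fg by (auto simp: hom_Pull)
    then show "f = g" using un[OF a'(1)] by auto
  qed
next
  assume H: "is_terminal C (\<phi> T)"
  have ex: "\<And>a. a \<in> Obj C \<Longrightarrow> \<exists>u. u \<in> hom C a (\<phi> T)"
    and un: "\<And>a u v. a \<in> Obj C \<Longrightarrow> u \<in> hom C a (\<phi> T) \<Longrightarrow> v \<in> hom C a (\<phi> T) \<Longrightarrow> u = v"
    using H unfolding terminal_alt by auto
  show "is_terminal (Pull C \<phi> X) T" unfolding terminal_alt
  proof (intro conjI ballI allI impI)
    show "T \<in> Obj (Pull C \<phi> X)" using T by simp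
  next
    fix a assume a: "a \<in> Obj (Pull C \<phi> X)"
    then obtain f where "f \<in> hom C (\<phi> a) (\<phi> T)" using ex phiX by auto
    then show "\<exists>f. f \<in> hom (Pull C \<phi> X) a T" using a T by (auto simp: hom_Pull)
  next
    fix a f g assume a: "a \<in> Obj (Pull C \<phi> X)" and fg: "f \<in> hom (Pull C \<phi> X) a T \<and> g \<in> hom (Pull C \<phi> X) a T"
    then obtain f0 g0 where "f = (a, T, f0)" "g = (a, T, g0)" "f0 \<in> hom C (\<phi> a) (\<phi> T)" "g0 \<in> hom C (\<phi> a) (\<phi> T)"
      by (auto elim!: hom_PullE)
    then show "f = g" using un phiX a by auto
  qed
qed

lemma Pull_product:
  assumes X: "A \<in> X" "B \<in> X" "P \<in> X"
  shows "is_product (Pull C \<phi> X) A B P (P, A, f1) (P, B, f2) \<longleftrightarrow> is_product C (\<phi> A) (\<phi> B) (\<phi> P) f1 f2"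
proof
  assume Pr: "is_product (Pull C \<phi> X) A B P (P, A, f1) (P, B, f2)"
  have h: "f1 \<in> hom C (\<phi> P) (\<phi> A)" "f2 \<in> hom C (\<phi> P) (\<phi> B)"
    using prod_hom[OF Pr] by (auto simp: hom_Pull)
  show "is_product C (\<phi> A) (\<phi> B) (\<phi> P) f1 f2"
  proof (rule prodI[OF phiX[OF X(3)] h])
    fix c f g assume f: "f \<in> hom C c (\<phi> A)" "g \<in> hom C c (\<phi> B)"
    then have "c \<in> Obj C" using hom_objs by blast
    then obtain c' where c': "c' \<in> X" "c = \<phi> c'" using phi_surj by metis
    have "(c', A, f) \<in> hom (Pull C \<phi> X) c' A" "(c', B, g) \<in> hom (Pull C \<phi> X) c' B"
      using c' f X by (auto simp: hom_Pull)
    then obtain u where u: "u \<in> hom (Pull C \<phi> X) c' P" "Cmp (Pull C \<phi> X) (P, A, f1) u = (c', A, f)"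
      "Cmp (Pull C \<phi> X) (P, B, f2) u = (c', B, g)"
      using P.prod_ex[OF Pr] by blast
    then show "\<exists>h\<in>hom C c (\<phi> P). Cmp C f1 h = f \<and> Cmp C f2 h = g"
      using c' by (auto elim!: hom_PullE)
  next
    fix c h h' assume hh: "h \<in> hom C c (\<phi> P)" "h' \<in> hom C c (\<phi> P)" "Cmp C f1 h = Cmp C f1 h'"
      "Cmp C f2 h = Cmp C f2 h'"
    then have "c \<in> Obj C" using hom_objs by blast
    then obtain c' where c': "c' \<in> X" "c = \<phi> c'" using phi_surj by metis
    have "(c', P, h) \<in> hom (Pull C \<phi> X) c' P" "(c', P, h') \<in> hom (Pull C \<phi> X) c' P"
      using c' hh X by (auto simp: hom_Pull)
    then have "(c', P, h) = (c', P, h')"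
      by (rule P.prod_uniq[OF Pr]) (use hh in simp_all)
    then show "h = h'" by simp
  qed
next
  assume Pr: "is_product C (\<phi> A) (\<phi> B) (\<phi> P) f1 f2"
  have h: "f1 \<in> hom C (\<phi> P) (\<phi> A)" "f2 \<in> hom C (\<phi> P) (\<phi> B)" using prod_hom[OF Pr] by auto
  show "is_product (Pull C \<phi> X) A B P (P, A, f1) (P, B, f2)"
  proof (rule prodI)
    show "P \<in> Obj (Pull C \<phi> X)" using X by simp
    show "(P, A, f1) \<in> hom (Pull C \<phi> X) P A" "(P, B, f2) \<in> hom (Pull C \<phi> X) P B"
      using h X by (auto simp: hom_Pull)
  next
    fix c f g assume f: "f \<in> hom (Pull C \<phi> X) c A" "g \<in> hom (Pull C \<phi> X) c B"
    then obtain f0 g0 where f0: "f = (c, A, f0)" "g = (c, B, g0)" "c \<in> X"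
      "f0 \<in> hom C (\<phi> c) (\<phi> A)" "g0 \<in> hom C (\<phi> c) (\<phi> B)" by (auto elim!: hom_PullE)
    obtain h0 where "h0 \<in> hom C (\<phi> c) (\<phi> P)" "Cmp C f1 h0 = f0" "Cmp C f2 h0 = g0"
      using prod_ex[OF Pr f0(4,5)] by blast
    then show "\<exists>h\<in>hom (Pull C \<phi> X) c P. Cmp (Pull C \<phi> X) (P, A, f1) h = f \<and> Cmp (Pull C \<phi> X) (P, B, f2) h = g"
      using f0 X by (intro bexI[of _ "(c, P, h0)"]) (auto simp: hom_Pull)
  next
    fix c h h' assume hh: "h \<in> hom (Pull C \<phi> X) c P" "h' \<in> hom (Pull C \<phi> X) c P"
      "Cmp (Pull C \<phi> X) (P, A, f1) h = Cmp (Pull C \<phi> X) (P, A, f1) h'"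
      "Cmp (Pull C \<phi> X) (P, B, f2) h = Cmp (Pull C \<phi> X) (P, B, f2) h'"
    then obtain h0 h0' where "h = (c, P, h0)" "h' = (c, P, h0')" "h0 \<in> hom C (\<phi> c) (\<phi> P)"
      "h0' \<in> hom C (\<phi> c) (\<phi> P)" by (auto elim!: hom_PullE)
    then show "h = h'" using hh prod_uniq[OF Pr] by auto
  qed
qed

lemma Pull_product_gen:
  assumes Pr: "is_product (Pull C \<phi> X) A B P p1 p2"
  shows "A \<in> X \<and> B \<in> X \<and> P \<in> X \<and> (\<exists>k1 k2. p1 = (P, A, k1) \<and> p2 = (P, B, k2) \<and>
     is_product C (\<phi> A) (\<phi> B) (\<phi> P) k1 k2)"
proof -
  have "p1 \<in> hom (Pull C \<phi> X) P A" "p2 \<in> hom (Pull C \<phi> X) P B" using prod_hom[OF Pr] by auto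
  then obtain f1 f2 where f: "p1 = (P, A, f1)" "p2 = (P, B, f2)" "A \<in> X" "B \<in> X" "P \<in> X"
    by (auto elim!: hom_PullE)
  then show ?thesis using Pull_product Pr by auto
qed

lemma Pull_xarr:
  assumes X: "E \<in> X" "x \<in> X" "P \<in> X" "c \<in> X" "q \<in> X"
    and PP: "is_product C (\<phi> E) (\<phi> x) (\<phi> P) f1 f2" and QQ: "is_product C (\<phi> c) (\<phi> x) (\<phi> q) g1 g2"
    and g: "g \<in> hom C (\<phi> c) (\<phi> E)"
  shows "xarr (Pull C \<phi> X) P (P, E, f1) (P, x, f2) q (q, c, g1) (q, x, g2) (c, E, g) =
     (q, P, xarr C (\<phi> P) f1 f2 (\<phi> q) g1 g2 g)"
proof -
  have P': "is_product (Pull C \<phi> X) E x P (P, E, f1) (P, x, f2)" using Pull_product X PP by blast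
  have Q': "is_product (Pull C \<phi> X) c x q (q, c, g1) (q, x, g2)" using Pull_product X QQ by blast
  note XC = xarr[OF PP QQ g]
  have g1: "g1 \<in> hom C (\<phi> q) (\<phi> c)" using prod_hom[OF QQ] by auto
  show ?thesis
    by (rule P.xarr_uniq[OF P' Q', symmetric]) (use XC X g g1 in \<open>auto simp: hom_Pull\<close>)
qed

lemma Pull_exp:
  assumes X: "x \<in> X" "y \<in> X" "E \<in> X" "P \<in> X"
    and EE: "is_exponential C (\<phi> x) (\<phi> y) (\<phi> E) (\<phi> P) f1 f2 ev"
  shows "is_exponential (Pull C \<phi> X) x y E P (P, E, f1) (P, x, f2) (P, y, ev)"
proof -
  have PP: "is_product C (\<phi> E) (\<phi> x) (\<phi> P) f1 f2" "ev \<in> hom C (\<phi> P) (\<phi> y)" using EE exp_prod by blast+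
  show ?thesis
  proof (rule P.expI)
    show "is_product (Pull C \<phi> X) E x P (P, E, f1) (P, x, f2)" using Pull_product X PP by blast
    show "(P, y, ev) \<in> hom (Pull C \<phi> X) P y" using X PP by (auto simp: hom_Pull)
  next
    fix c q q1 q2 f assume Q: "is_product (Pull C \<phi> X) c x q q1 q2" and f: "f \<in> hom (Pull C \<phi> X) q y"
    have cq: "c \<in> X" "q \<in> X" using Pull_product_gen[OF Q] by auto
    obtain k1 k2 where k: "q1 = (q, c, k1)" "q2 = (q, x, k2)" and KK: "is_product C (\<phi> c) (\<phi> x) (\<phi> q) k1 k2"
      using Pull_product_gen[OF Q] by blast
    obtain f0 where f0: "f = (q, y, f0)" "f0 \<in> hom C (\<phi> q) (\<phi> y)" using f by (auto elim!: hom_PullE)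
    obtain g where g: "g \<in> hom C (\<phi> c) (\<phi> E)"
        "Cmp C ev (xarr C (\<phi> P) f1 f2 (\<phi> q) k1 k2 g) = f0"
      using exp_ex[OF EE KK f0(2)] by blast
    have "xarr (Pull C \<phi> X) P (P, E, f1) (P, x, f2) q q1 q2 (c, E, g) =
       (q, P, xarr C (\<phi> P) f1 f2 (\<phi> q) k1 k2 g)"
      unfolding k by (rule Pull_xarr[OF X(3,1,4) cq PP(1) KK g(1)])
    moreover have "(c, E, g) \<in> hom (Pull C \<phi> X) c E" using g cq X by (auto simp: hom_Pull)
    ultimately show "\<exists>g\<in>hom (Pull C \<phi> X) c E. Cmp (Pull C \<phi> X) (P, y, ev) (xarr (Pull C \<phi> X) P (P, E, f1) (P, x, f2) q q1 q2 g) = f"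
      using g f0 by force
  next
    fix c q q1 q2 g g' assume Q: "is_product (Pull C \<phi> X) c x q q1 q2"
      and g: "g \<in> hom (Pull C \<phi> X) c E" "g' \<in> hom (Pull C \<phi> X) c E"
      and eq: "Cmp (Pull C \<phi> X) (P, y, ev) (xarr (Pull C \<phi> X) P (P, E, f1) (P, x, f2) q q1 q2 g) =
               Cmp (Pull C \<phi> X) (P, y, ev) (xarr (Pull C \<phi> X) P (P, E, f1) (P, x, f2) q q1 q2 g')"
    have cq: "c \<in> X" "q \<in> X" using Pull_product_gen[OF Q] by auto
    obtain k1 k2 where k: "q1 = (q, c, k1)" "q2 = (q, x, k2)" and KK: "is_product C (\<phi> c) (\<phi> x) (\<phi> q) k1 k2"
      using Pull_product_gen[OF Q] by blast
    obtain g0 g0' where g0: "g = (c, E, g0)" "g' = (c, E, g0')" "g0 \<in> hom C (\<phi> c) (\<phi> E)"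
      "g0' \<in> hom C (\<phi> c) (\<phi> E)" using g by (auto elim!: hom_PullE)
    have x1: "xarr (Pull C \<phi> X) P (P, E, f1) (P, x, f2) q q1 q2 g = (q, P, xarr C (\<phi> P) f1 f2 (\<phi> q) k1 k2 g0)"
      unfolding k g0 by (rule Pull_xarr[OF X(3,1,4) cq PP(1) KK g0(3)])
    have x2: "xarr (Pull C \<phi> X) P (P, E, f1) (P, x, f2) q q1 q2 g' = (q, P, xarr C (\<phi> P) f1 f2 (\<phi> q) k1 k2 g0')"
      unfolding k g0 by (rule Pull_xarr[OF X(3,1,4) cq PP(1) KK g0(4)])
    have "Cmp C ev (xarr C (\<phi> P) f1 f2 (\<phi> q) k1 k2 g0) = Cmp C ev (xarr C (\<phi> P) f1 f2 (\<phi> q) k1 k2 g0')"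
      using eq unfolding x1 x2 by simp
    then have "g0 = g0'" using exp_uniq[OF EE KK g0(3,4)] by blast
    then show "g = g'" using g0 by simp
  qed
qed

end


lemma (in cat) exp_canon:
  assumes P: "is_product C e x p p1 p2" and ev: "ev \<in> hom C p y"
    and canon: "\<And>c. c \<in> Obj C \<Longrightarrow> \<exists>Q Q1 Q2. is_product C c x Q Q1 Q2 \<and>
       (\<forall>f \<in> hom C Q y. \<exists>g \<in> hom C c e. Cmp C ev (xarr C p p1 p2 Q Q1 Q2 g) = f) \<and>
       (\<forall>g \<in> hom C c e. \<forall>g' \<in> hom C c e. Cmp C ev (xarr C p p1 p2 Q Q1 Q2 g) =
           Cmp C ev (xarr C p p1 p2 Q Q1 Q2 g') \<longrightarrow> g = g')"
  shows "is_exponential C x y e p p1 p2 ev"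
proof -
  have main: "\<And>c q q1 q2. is_product C c x q q1 q2 \<Longrightarrow> (\<forall>f \<in> hom C q y. \<exists>g \<in> hom C c e.
       Cmp C ev (xarr C p p1 p2 q q1 q2 g) = f) \<and>
       (\<forall>g \<in> hom C c e. \<forall>g' \<in> hom C c e. Cmp C ev (xarr C p p1 p2 q q1 q2 g) =
           Cmp C ev (xarr C p p1 p2 q q1 q2 g') \<longrightarrow> g = g')"
  proof -
    fix c q q1 q2 assume Q: "is_product C c x q q1 q2"
    have "c \<in> Obj C" using hom_objs[OF prod_p1[OF Q]] by blast
    then obtain R R1 R2 where R: "is_product C c x R R1 R2"
      and ex: "\<forall>f \<in> hom C R y. \<exists>g \<in> hom C c e. Cmp C ev (xarr C p p1 p2 R R1 R2 g) = f"
      and un: "\<forall>g \<in> hom C c e. \<forall>g' \<in> hom C c e. Cmp C ev (xarr C p p1 p2 R R1 R2 g) =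
           Cmp C ev (xarr C p p1 p2 R R1 R2 g') \<longrightarrow> g = g'"
      using canon by blast
    obtain j where j: "j \<in> hom C q R" "is_iso C j" "Cmp C R1 j = q1" "Cmp C R2 j = q2"
      using prod_iso[OF R Q] by blast
    obtain k where k: "k \<in> hom C R q" "Cmp C k j = Idt C q" "Cmp C j k = Idt C R"
      using isoE[OF j(2) j(1)] by blast
    have Rh: "R1 \<in> hom C R c" "R2 \<in> hom C R x" using prod_hom[OF R] by auto
    have ph: "p1 \<in> hom C p e" "p2 \<in> hom C p x" using prod_hom[OF P] by auto
    have key: "\<And>g. g \<in> hom C c e \<Longrightarrow> xarr C p p1 p2 q q1 q2 g = Cmp C (xarr C p p1 p2 R R1 R2 g) j"
    proof -
      fix g assume g: "g \<in> hom C c e"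
      note XR = xarr[OF P R g]
      have XRh: "xarr C p p1 p2 R R1 R2 g \<in> hom C R p" using XR by blast
      show "?thesis g"
      proof (rule xarr_uniq[OF P Q g, symmetric])
        show "Cmp C (xarr C p p1 p2 R R1 R2 g) j \<in> hom C q p" using comp_hom[OF j(1) XRh] .
        have "Cmp C p1 (Cmp C (xarr C p p1 p2 R R1 R2 g) j) = Cmp C (Cmp C p1 (xarr C p p1 p2 R R1 R2 g)) j"
          using assoc[OF j(1) XRh ph(1)] by simp
        also have "\<dots> = Cmp C (Cmp C g R1) j" using XR by simp
        also have "\<dots> = Cmp C g (Cmp C R1 j)" using assoc[OF j(1) Rh(1) g] by simp
        finally show "Cmp C p1 (Cmp C (xarr C p p1 p2 R R1 R2 g) j) = Cmp C g q1" using j by simp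
        have "Cmp C p2 (Cmp C (xarr C p p1 p2 R R1 R2 g) j) = Cmp C (Cmp C p2 (xarr C p p1 p2 R R1 R2 g)) j"
          using assoc[OF j(1) XRh ph(2)] by simp
        then show "Cmp C p2 (Cmp C (xarr C p p1 p2 R R1 R2 g) j) = q2" using XR j by simp
      qed
    qed
    have evkey: "\<And>g. g \<in> hom C c e \<Longrightarrow> Cmp C ev (xarr C p p1 p2 q q1 q2 g) = Cmp C (Cmp C ev (xarr C p p1 p2 R R1 R2 g)) j"
      using key assoc[OF j(1) xarr[OF P R, THEN conjunct1] ev] by simp
    show "?thesis c q q1 q2"
    proof (intro conjI ballI impI)
      fix f assume f: "f \<in> hom C q y"
      then obtain g where g: "g \<in> hom C c e" "Cmp C ev (xarr C p p1 p2 R R1 R2 g) = Cmp C f k"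
        using ex comp_hom[OF k(1) f] by blast
      have "Cmp C ev (xarr C p p1 p2 q q1 q2 g) = Cmp C (Cmp C f k) j"
        using evkey[OF g(1)] g by simp
      also have "\<dots> = f" using assoc[OF j(1) k(1) f] k idr[OF f] by simp
      finally show "\<exists>g \<in> hom C c e. Cmp C ev (xarr C p p1 p2 q q1 q2 g) = f" using g by blast
    next
      fix g g' assume g: "g \<in> hom C c e" "g' \<in> hom C c e"
        and eq: "Cmp C ev (xarr C p p1 p2 q q1 q2 g) = Cmp C ev (xarr C p p1 p2 q q1 q2 g')"
      have "Cmp C (Cmp C ev (xarr C p p1 p2 R R1 R2 g)) j = Cmp C (Cmp C ev (xarr C p p1 p2 R R1 R2 g')) j"
        using eq evkey g by simp
      then have "Cmp C ev (xarr C p p1 p2 R R1 R2 g) = Cmp C ev (xarr C p p1 p2 R R1 R2 g')"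
        using cancel_r[OF j(1,2) comp_hom[OF xarr[OF P R g(1), THEN conjunct1] ev]
           comp_hom[OF xarr[OF P R g(2), THEN conjunct1] ev]] by blast
      then show "g = g'" using un g by blast
    qed
  qed
  show ?thesis using expI[OF P ev] main by blast
qed

definition lftP :: "'a bimag \<Rightarrow> 'a bimag" where "lftP A = (case A of Prod a b \<Rightarrow> a | _ \<Rightarrow> A)"
definition rgtP :: "'a bimag \<Rightarrow> 'a bimag" where "rgtP A = (case A of Prod a b \<Rightarrow> b | _ \<Rightarrow> A)"

lemma lftP_simp[simp]: "lftP (Prod a b) = a" and rgtP_simp[simp]: "rgtP (Prod a b) = b"
  by (simp_all add: lftP_def rgtP_def)

primrec tdom :: "'a tm \<Rightarrow> 'a bimag" where
  "tdom (TId A) = A"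
| "tdom (TComp g f) = tdom f"
| "tdom (TBang A) = A"
| "tdom (TFst A B) = Prod A B"
| "tdom (TSnd A B) = Prod A B"
| "tdom (TPair f g) = tdom f"
| "tdom (TEv X Y) = Prod (Exp X Y) X"
| "tdom (TLam f) = lftP (tdom f)"

primrec tcod :: "'a tm \<Rightarrow> 'a bimag" where
  "tcod (TId A) = A"
| "tcod (TComp g f) = tcod g"
| "tcod (TBang A) = One"
| "tcod (TFst A B) = A"
| "tcod (TSnd A B) = B"
| "tcod (TPair f g) = Prod (tcod f) (tcod g)"
| "tcod (TEv X Y) = Y"
| "tcod (TLam f) = Exp (rgtP (tdom f)) (tcod f)"

lemma typed_tdc: "typed S t A B \<Longrightarrow> tdom t = A \<and> tcod t = B"
  by (induction rule: typed.induct) auto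

lemma typed_unique: "typed S t A B \<Longrightarrow> typed S t A' B' \<Longrightarrow> A = A' \<and> B = B'"
  using typed_tdc by metis

lemma BiMag_simps[simp]:
  "Base a \<in> BiMag S \<longleftrightarrow> a \<in> S" "One \<in> BiMag S"
  "Prod A B \<in> BiMag S \<longleftrightarrow> A \<in> BiMag S \<and> B \<in> BiMag S"
  "Exp A B \<in> BiMag S \<longleftrightarrow> A \<in> BiMag S \<and> B \<in> BiMag S"
  unfolding BiMag_def by auto

lemma typed_BiMag: "typed S t A B \<Longrightarrow> A \<in> BiMag S \<and> B \<in> BiMag S"
  by (induction rule: typed.induct) auto

lemma teq_typed: "teq S s t \<Longrightarrow> \<exists>A B. typed S s A B \<and> typed S t A B"
proof (induction rule: teq.induct)
  case (e_refl f A B) then show ?case by blast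
next
  case (e_sym f g) then show ?case by blast
next
  case (e_trans f g h) then show ?case using typed_unique by metis
next
  case (e_comp f f' g g' A B C)
  then show ?case using typed_unique typed.t_comp by metis
next
  case (e_pair f f' g g' C A B)
  then show ?case using typed_unique typed.t_pair by metis
next
  case (e_lam f f' C X Y)
  then show ?case using typed_unique typed.t_lam by metis
next
  case (e_idl f A B)
  then show ?case using typed_BiMag typed.t_id typed.t_comp by metis
next
  case (e_idr f A B)
  then show ?case using typed_BiMag typed.t_id typed.t_comp by metis
next
  case (e_assoc f A B g C h D)
  then show ?case using typed.t_comp by metis
next
  case (e_bang f A)
  then show ?case using typed_BiMag typed.t_bang by metis
next
  case (e_fst f C A g B)
  then show ?case using typed_BiMag typed.t_fst typed.t_pair typed.t_comp by metis
next
  case (e_snd f C A g B)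
  then show ?case using typed_BiMag typed.t_snd typed.t_pair typed.t_comp by metis
next
  case (e_pair_eta h C A B)
  have "A \<in> BiMag S" "B \<in> BiMag S" using typed_BiMag[OF e_pair_eta] by auto
  then show ?case using e_pair_eta typed.t_fst typed.t_snd typed.t_pair typed.t_comp by metis
next
  case (e_beta f C X Y)
  have "C \<in> BiMag S" "X \<in> BiMag S" "Y \<in> BiMag S" using typed_BiMag[OF e_beta] by auto
  then show ?case using e_beta typed.intros by metis
next
  case (e_eta g C X Y)
  have "C \<in> BiMag S" "X \<in> BiMag S" "Y \<in> BiMag S" using typed_BiMag[OF e_eta] by auto
  then show ?case using e_eta typed.intros by (metis BiMag_simps(3))
qed

lemma teq_typedD: "teq S s t \<Longrightarrow> typed S s A B \<Longrightarrow> typed S t A B"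
  using teq_typed typed_unique by metis

lemma teq_typedD': "teq S s t \<Longrightarrow> typed S t A B \<Longrightarrow> typed S s A B"
  using teq_typed typed_unique by metis

definition cls :: "'a set \<Rightarrow> 'a tm \<Rightarrow> 'a tm set" where "cls S t = {u. teq S t u}"

lemma cls_eq: "teq S s t \<Longrightarrow> cls S s = cls S t"
  unfolding cls_def using teq.e_sym teq.e_trans by blast

lemma cls_eqD: "typed S s A B \<Longrightarrow> cls S s = cls S t \<Longrightarrow> teq S s t"
  unfolding cls_def using teq.e_refl teq.e_sym by blast

lemma some_cls: "typed S t A B \<Longrightarrow> teq S t (SOME u. u \<in> cls S t)"
  unfolding cls_def using teq.e_refl by (metis mem_Collect_eq someI)

lemma CFam_simps[simp]:
  "Obj (CFam S) = BiMag S" "Dom (CFam S) (A, B, c) = A" "Cod (CFam S) (A, B, c) = B"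
  "Idt (CFam S) A = (A, A, cls S (TId A))"
  unfolding CFam_def cls_def by simp_all

lemma hom_CFam: "u \<in> hom (CFam S) A B \<longleftrightarrow> (\<exists>t. u = (A, B, cls S t) \<and> typed S t A B)"
  unfolding hom_def CFam_def cls_def by auto

lemma Cmp_CFam: "typed S f A B \<Longrightarrow> typed S g B C \<Longrightarrow>
   Cmp (CFam S) (B, C, cls S g) (A, B, cls S f) = (A, C, cls S (TComp g f))"
proof -
  assume f: "typed S f A B" and g: "typed S g B C"
  have "teq S (TComp g f) (TComp (SOME u. u \<in> cls S g) (SOME u. u \<in> cls S f))"
    using teq.e_comp[OF some_cls[OF f] some_cls[OF g] f g] .
  then show ?thesis unfolding CFam_def using cls_eq[of S] by (simp add: cls_def)
qed

lemma cat_CFam: "category (CFam S)"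
proof -
  have arr: "\<And>u. u \<in> Arr (CFam S) \<longleftrightarrow> (\<exists>A B. u \<in> hom (CFam S) A B)"
    unfolding hom_def CFam_def by auto
  show ?thesis unfolding category_def
  proof (intro conjI ballI allI impI)
    fix f assume "f \<in> Arr (CFam S)"
    then obtain A B t where ft: "f = (A, B, cls S t)" "typed S t A B" using arr by (auto simp: hom_CFam)
    then show "Dom (CFam S) f \<in> Obj (CFam S)" "Cod (CFam S) f \<in> Obj (CFam S)"
      using typed_BiMag[OF ft(2)] by auto
  next
    fix a assume "a \<in> Obj (CFam S)"
    then show "Idt (CFam S) a \<in> hom (CFam S) a a" by (auto simp: hom_CFam intro: typed.t_id)
  next
    fix f g assume a: "f \<in> Arr (CFam S) \<and> g \<in> Arr (CFam S) \<and> Cod (CFam S) f = Dom (CFam S) g"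
    then obtain A B B' C t s where ts: "f = (A, B, cls S t)" "typed S t A B" "g = (B', C, cls S s)" "typed S s B' C"
      using arr by (auto simp: hom_CFam)
    then have "B' = B" using a by simp
    then have "Cmp (CFam S) g f = (A, C, cls S (TComp s t))" using ts Cmp_CFam by simp
    then show "Cmp (CFam S) g f \<in> hom (CFam S) (Dom (CFam S) f) (Cod (CFam S) g)"
      using ts typed.t_comp[OF ts(2)] \<open>B' = B\<close> by (auto simp: hom_CFam)
  next
    fix f assume "f \<in> Arr (CFam S)"
    then obtain A B t where f: "f = (A, B, cls S t)" "typed S t A B" using arr by (auto simp: hom_CFam)
    have AB: "A \<in> BiMag S" "B \<in> BiMag S" using typed_BiMag[OF f(2)] by auto
    show "Cmp (CFam S) (Idt (CFam S) (Cod (CFam S) f)) f = f"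
       "Cmp (CFam S) f (Idt (CFam S) (Dom (CFam S) f)) = f"
      apply -
      subgoal using f AB Cmp_CFam[OF f(2) typed.t_id[OF AB(2)]] cls_eq[OF teq.e_idl[OF f(2)]] by simp
      subgoal
      proof -
        have "Cmp (CFam S) f (Idt (CFam S) (Dom (CFam S) f)) = Cmp (CFam S) (A, B, cls S t) (A, A, cls S (TId A))"
          using f by simp
        also have "\<dots> = (A, B, cls S (TComp t (TId A)))" by (rule Cmp_CFam[OF typed.t_id[OF AB(1)] f(2)])
        also have "\<dots> = f" using cls_eq[OF teq.e_idr[OF f(2)]] f by simp
        finally show ?thesis .
      qed
      done
  next
    fix f g h assume a: "f \<in> Arr (CFam S) \<and> g \<in> Arr (CFam S) \<and> h \<in> Arr (CFam S) \<and>
       Cod (CFam S) f = Dom (CFam S) g \<and> Cod (CFam S) g = Dom (CFam S) h"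
    then obtain A B B' C C' D t s r where tt: "f = (A, B, cls S t)" "typed S t A B" "g = (B', C, cls S s)" "typed S s B' C"
      "h = (C', D, cls S r)" "typed S r C' D"
      using arr by (auto simp: hom_CFam)
    then have e: "B' = B" "C' = C" using a by auto
    have t2: "typed S s B C" "typed S r C D" using tt e by auto
    have "Cmp (CFam S) h (Cmp (CFam S) g f) = Cmp (CFam S) (C, D, cls S r) (A, C, cls S (TComp s t))"
      using tt e Cmp_CFam[OF tt(2) t2(1)] by simp
    also have "\<dots> = (A, D, cls S (TComp r (TComp s t)))" using Cmp_CFam[OF typed.t_comp[OF tt(2) t2(1)] t2(2)] .
    also have "\<dots> = (A, D, cls S (TComp (TComp r s) t))" using cls_eq[OF teq.e_assoc[OF tt(2) t2]] by simp
    also have "\<dots> = Cmp (CFam S) (B, D, cls S (TComp r s)) (A, B, cls S t)"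
      using Cmp_CFam[OF tt(2) typed.t_comp[OF t2]] by simp
    also have "\<dots> = Cmp (CFam S) (Cmp (CFam S) h g) f" using tt e Cmp_CFam[OF t2] by simp
    finally show "Cmp (CFam S) h (Cmp (CFam S) g f) = Cmp (CFam S) (Cmp (CFam S) h g) f" .
  qed
qed

interpretation CF: cat "CFam S" for S using cat_CFam by unfold_locales

lemma CFam_terminal: "is_terminal (CFam S) One"
  unfolding is_terminal_def
proof (intro conjI ballI)
  show "One \<in> Obj (CFam S)" by simp
  fix a assume a: "a \<in> Obj (CFam S)"
  show "\<exists>!f. f \<in> hom (CFam S) a One"
  proof
    show "(a, One, cls S (TBang a)) \<in> hom (CFam S) a One" using a by (auto simp: hom_CFam intro: typed.t_bang)
    fix f assume "f \<in> hom (CFam S) a One"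
    then obtain t where "f = (a, One, cls S t)" "typed S t a One" by (auto simp: hom_CFam)
    then show "f = (a, One, cls S (TBang a))" using cls_eq teq.e_bang by metis
  qed
qed

declare teq.e_trans[trans]

lemma CFam_product:
  assumes AB: "A \<in> BiMag S" "B \<in> BiMag S"
  shows "is_product (CFam S) A B (Prod A B) (Prod A B, A, cls S (TFst A B)) (Prod A B, B, cls S (TSnd A B))"
proof (rule prodI)
  show "Prod A B \<in> Obj (CFam S)" using AB by simp
  show "(Prod A B, A, cls S (TFst A B)) \<in> hom (CFam S) (Prod A B) A"
    "(Prod A B, B, cls S (TSnd A B)) \<in> hom (CFam S) (Prod A B) B"
    using AB by (auto simp: hom_CFam intro: typed.intros)
next
  fix c f g assume "f \<in> hom (CFam S) c A" "g \<in> hom (CFam S) c B"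
  then obtain t s where ts: "f = (c, A, cls S t)" "typed S t c A" "g = (c, B, cls S s)" "typed S s c B"
    by (auto simp: hom_CFam)
  have "(c, Prod A B, cls S (TPair t s)) \<in> hom (CFam S) c (Prod A B)"
    using ts by (auto simp: hom_CFam intro: typed.intros)
  moreover have "Cmp (CFam S) (Prod A B, A, cls S (TFst A B)) (c, Prod A B, cls S (TPair t s)) = f"
    using ts Cmp_CFam[OF typed.t_pair[OF ts(2,4)] typed.t_fst[OF AB]] cls_eq[OF teq.e_fst[OF ts(2,4)]] by simp
  moreover have "Cmp (CFam S) (Prod A B, B, cls S (TSnd A B)) (c, Prod A B, cls S (TPair t s)) = g"
    using ts Cmp_CFam[OF typed.t_pair[OF ts(2,4)] typed.t_snd[OF AB]] cls_eq[OF teq.e_snd[OF ts(2,4)]] by simp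
  ultimately show "\<exists>h\<in>hom (CFam S) c (Prod A B). Cmp (CFam S) (Prod A B, A, cls S (TFst A B)) h = f \<and>
        Cmp (CFam S) (Prod A B, B, cls S (TSnd A B)) h = g" by blast
next
  fix c h h' assume h: "h \<in> hom (CFam S) c (Prod A B)" "h' \<in> hom (CFam S) c (Prod A B)"
    and e: "Cmp (CFam S) (Prod A B, A, cls S (TFst A B)) h = Cmp (CFam S) (Prod A B, A, cls S (TFst A B)) h'"
      "Cmp (CFam S) (Prod A B, B, cls S (TSnd A B)) h = Cmp (CFam S) (Prod A B, B, cls S (TSnd A B)) h'"
  then obtain t s where ts: "h = (c, Prod A B, cls S t)" "typed S t c (Prod A B)" "h' = (c, Prod A B, cls S s)" "typed S s c (Prod A B)"
    by (auto simp: hom_CFam)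
  have t1: "typed S (TFst A B) (Prod A B) A" "typed S (TSnd A B) (Prod A B) B" using typed.t_fst[OF AB] typed.t_snd[OF AB] by auto
  have "cls S (TComp (TFst A B) t) = cls S (TComp (TFst A B) s)"
    "cls S (TComp (TSnd A B) t) = cls S (TComp (TSnd A B) s)"
    using e ts Cmp_CFam[OF ts(2) t1(1)] Cmp_CFam[OF ts(4) t1(1)] Cmp_CFam[OF ts(2) t1(2)] Cmp_CFam[OF ts(4) t1(2)] by auto
  then have q: "teq S (TComp (TFst A B) t) (TComp (TFst A B) s)" "teq S (TComp (TSnd A B) t) (TComp (TSnd A B) s)"
    using cls_eqD typed.t_comp ts t1 by metis+
  have "teq S t (TPair (TComp (TFst A B) t) (TComp (TSnd A B) t))"
    using teq.e_sym[OF teq.e_pair_eta[OF ts(2)]] .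
  also have "teq S (TPair (TComp (TFst A B) t) (TComp (TSnd A B) t)) (TPair (TComp (TFst A B) s) (TComp (TSnd A B) s))"
    using teq.e_pair[OF q] typed.t_comp ts t1 by metis
  also have "teq S (TPair (TComp (TFst A B) s) (TComp (TSnd A B) s)) s" using teq.e_pair_eta[OF ts(4)] .
  finally show "h = h'" using ts cls_eq by metis
qed


lemma CFam_xarr:
  assumes t: "typed S g c E" and X: "X \<in> BiMag S"
  shows "xarr (CFam S) (Prod E X) (Prod E X, E, cls S (TFst E X)) (Prod E X, X, cls S (TSnd E X))
     (Prod c X) (Prod c X, c, cls S (TFst c X)) (Prod c X, X, cls S (TSnd c X)) (c, E, cls S g) =
     (Prod c X, Prod E X, cls S (TPair (TComp g (TFst c X)) (TSnd c X)))"
proof -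
  have cE: "c \<in> BiMag S" "E \<in> BiMag S" using typed_BiMag[OF t] by auto
  have ty: "typed S (TFst c X) (Prod c X) c" "typed S (TSnd c X) (Prod c X) X"
    "typed S (TFst E X) (Prod E X) E" "typed S (TSnd E X) (Prod E X) X"
    using typed.t_fst[OF cE(1) X] typed.t_snd[OF cE(1) X] typed.t_fst[OF cE(2) X] typed.t_snd[OF cE(2) X] by auto
  have tp: "typed S (TPair (TComp g (TFst c X)) (TSnd c X)) (Prod c X) (Prod E X)"
    by (rule typed.t_pair[OF typed.t_comp[OF ty(1) t] ty(2)])
  show ?thesis
  proof (rule CF.xarr_uniq[OF CFam_product[OF cE(2) X] CFam_product[OF cE(1) X], symmetric])
    show "(c, E, cls S g) \<in> hom (CFam S) c E" using t by (auto simp: hom_CFam)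
    show "(Prod c X, Prod E X, cls S (TPair (TComp g (TFst c X)) (TSnd c X))) \<in> hom (CFam S) (Prod c X) (Prod E X)"
      using tp by (auto simp: hom_CFam)
    show "Cmp (CFam S) (Prod E X, E, cls S (TFst E X)) (Prod c X, Prod E X, cls S (TPair (TComp g (TFst c X)) (TSnd c X))) =
      Cmp (CFam S) (c, E, cls S g) (Prod c X, c, cls S (TFst c X))"
      using Cmp_CFam[OF tp ty(3)] Cmp_CFam[OF ty(1) t]
        cls_eq[OF teq.e_fst[OF typed.t_comp[OF ty(1) t] ty(2)]] by simp
    show "Cmp (CFam S) (Prod E X, X, cls S (TSnd E X)) (Prod c X, Prod E X, cls S (TPair (TComp g (TFst c X)) (TSnd c X))) =
      (Prod c X, X, cls S (TSnd c X))"
      using Cmp_CFam[OF tp ty(4)]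
        cls_eq[OF teq.e_snd[OF typed.t_comp[OF ty(1) t] ty(2)]] by simp
  qed
qed

lemma CFam_exp:
  assumes X: "X \<in> BiMag S" and Y: "Y \<in> BiMag S"
  shows "is_exponential (CFam S) X Y (Exp X Y) (Prod (Exp X Y) X)
     (Prod (Exp X Y) X, Exp X Y, cls S (TFst (Exp X Y) X)) (Prod (Exp X Y) X, X, cls S (TSnd (Exp X Y) X))
     (Prod (Exp X Y) X, Y, cls S (TEv X Y))"
proof (rule CF.exp_canon[OF CFam_product])
  show "Exp X Y \<in> BiMag S" "X \<in> BiMag S" using X Y by auto
  have tev: "typed S (TEv X Y) (Prod (Exp X Y) X) Y" by (rule typed.t_ev[OF X Y])
  then show "(Prod (Exp X Y) X, Y, cls S (TEv X Y)) \<in> hom (CFam S) (Prod (Exp X Y) X) Y"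
    by (auto simp: hom_CFam)
  fix c assume c: "c \<in> Obj (CFam S)"
  then have c': "c \<in> BiMag S" by simp
  have ty: "typed S (TFst c X) (Prod c X) c" "typed S (TSnd c X) (Prod c X) X"
    using typed.t_fst[OF c' X] typed.t_snd[OF c' X] by auto
  have ev_comp: "\<And>g. typed S g c (Exp X Y) \<Longrightarrow>
     Cmp (CFam S) (Prod (Exp X Y) X, Y, cls S (TEv X Y))
       (xarr (CFam S) (Prod (Exp X Y) X) (Prod (Exp X Y) X, Exp X Y, cls S (TFst (Exp X Y) X))
         (Prod (Exp X Y) X, X, cls S (TSnd (Exp X Y) X))
         (Prod c X) (Prod c X, c, cls S (TFst c X)) (Prod c X, X, cls S (TSnd c X)) (c, Exp X Y, cls S g))
     = (Prod c X, Y, cls S (TComp (TEv X Y) (TPair (TComp g (TFst c X)) (TSnd c X))))"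
  proof -
    fix g assume g: "typed S g c (Exp X Y)"
    have tp: "typed S (TPair (TComp g (TFst c X)) (TSnd c X)) (Prod c X) (Prod (Exp X Y) X)"
      by (rule typed.t_pair[OF typed.t_comp[OF ty(1) g] ty(2)])
    show "?thesis g" using CFam_xarr[OF g X] Cmp_CFam[OF tp tev] by simp
  qed
  show "\<exists>Q Q1 Q2. is_product (CFam S) c X Q Q1 Q2 \<and>
     (\<forall>f\<in>hom (CFam S) Q Y. \<exists>g\<in>hom (CFam S) c (Exp X Y).
        Cmp (CFam S) (Prod (Exp X Y) X, Y, cls S (TEv X Y))
          (xarr (CFam S) (Prod (Exp X Y) X) (Prod (Exp X Y) X, Exp X Y, cls S (TFst (Exp X Y) X))
            (Prod (Exp X Y) X, X, cls S (TSnd (Exp X Y) X)) Q Q1 Q2 g) = f) \<and>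
     (\<forall>g\<in>hom (CFam S) c (Exp X Y). \<forall>g'\<in>hom (CFam S) c (Exp X Y).
        Cmp (CFam S) (Prod (Exp X Y) X, Y, cls S (TEv X Y))
          (xarr (CFam S) (Prod (Exp X Y) X) (Prod (Exp X Y) X, Exp X Y, cls S (TFst (Exp X Y) X))
            (Prod (Exp X Y) X, X, cls S (TSnd (Exp X Y) X)) Q Q1 Q2 g) =
        Cmp (CFam S) (Prod (Exp X Y) X, Y, cls S (TEv X Y))
          (xarr (CFam S) (Prod (Exp X Y) X) (Prod (Exp X Y) X, Exp X Y, cls S (TFst (Exp X Y) X))
            (Prod (Exp X Y) X, X, cls S (TSnd (Exp X Y) X)) Q Q1 Q2 g') \<longrightarrow> g = g')"
  proof (intro exI conjI ballI impI)
    show "is_product (CFam S) c X (Prod c X) (Prod c X, c, cls S (TFst c X)) (Prod c X, X, cls S (TSnd c X))"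
      using CFam_product[OF c' X] .
  next
    fix f assume "f \<in> hom (CFam S) (Prod c X) Y"
    then obtain f0 where f0: "f = (Prod c X, Y, cls S f0)" "typed S f0 (Prod c X) Y" by (auto simp: hom_CFam)
    have gl: "typed S (TLam f0) c (Exp X Y)" using f0 typed.t_lam by blast
    show "\<exists>g\<in>hom (CFam S) c (Exp X Y).
        Cmp (CFam S) (Prod (Exp X Y) X, Y, cls S (TEv X Y))
          (xarr (CFam S) (Prod (Exp X Y) X) (Prod (Exp X Y) X, Exp X Y, cls S (TFst (Exp X Y) X))
            (Prod (Exp X Y) X, X, cls S (TSnd (Exp X Y) X)) (Prod c X) (Prod c X, c, cls S (TFst c X))
            (Prod c X, X, cls S (TSnd c X)) g) = f"
      apply (rule bexI[of _ "(c, Exp X Y, cls S (TLam f0))"])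
      using ev_comp[OF gl] f0 cls_eq[OF teq.e_beta[OF f0(2)]] gl by (auto simp: hom_CFam)
  next
    fix g g' assume g: "g \<in> hom (CFam S) c (Exp X Y)" "g' \<in> hom (CFam S) c (Exp X Y)"
      and eq: "Cmp (CFam S) (Prod (Exp X Y) X, Y, cls S (TEv X Y))
          (xarr (CFam S) (Prod (Exp X Y) X) (Prod (Exp X Y) X, Exp X Y, cls S (TFst (Exp X Y) X))
            (Prod (Exp X Y) X, X, cls S (TSnd (Exp X Y) X)) (Prod c X) (Prod c X, c, cls S (TFst c X))
            (Prod c X, X, cls S (TSnd c X)) g) =
        Cmp (CFam S) (Prod (Exp X Y) X, Y, cls S (TEv X Y))
          (xarr (CFam S) (Prod (Exp X Y) X) (Prod (Exp X Y) X, Exp X Y, cls S (TFst (Exp X Y) X))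
            (Prod (Exp X Y) X, X, cls S (TSnd (Exp X Y) X)) (Prod c X) (Prod c X, c, cls S (TFst c X))
            (Prod c X, X, cls S (TSnd c X)) g')"
    obtain s s' where s: "g = (c, Exp X Y, cls S s)" "typed S s c (Exp X Y)"
      "g' = (c, Exp X Y, cls S s')" "typed S s' c (Exp X Y)" using g by (auto simp: hom_CFam)
    let ?b = "\<lambda>s. TComp (TEv X Y) (TPair (TComp s (TFst c X)) (TSnd c X))"
    have tb: "typed S (?b s) (Prod c X) Y" by (rule typed.t_comp[OF typed.t_pair[OF typed.t_comp[OF ty(1) s(2)] ty(2)] tev])
    have "cls S (?b s) = cls S (?b s')" using eq ev_comp s by simp
    then have e1: "teq S (?b s) (?b s')" using cls_eqD tb by metis
    have "teq S s (TLam (?b s))" using teq.e_sym[OF teq.e_eta[OF s(2)]] .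
    also have "teq S (TLam (?b s)) (TLam (?b s'))" using teq.e_lam[OF e1 tb] .
    also have "teq S (TLam (?b s')) s'" using teq.e_eta[OF s(4)] .
    finally show "g = g'" using s cls_eq by metis
  qed
qed


locale ccc = cat C for C :: "('o, 'm) cat" + assumes cc: "cartesian_closed C"
begin

definition T :: 'o where "T = (SOME t. is_terminal C t)"

definition PR :: "'o \<Rightarrow> 'o \<Rightarrow> 'o \<times> 'm \<times> 'm" where
  "PR a b = (SOME r. is_product C a b (fst r) (fst (snd r)) (snd (snd r)))"
definition "PO a b = fst (PR a b)"
definition "P1 a b = fst (snd (PR a b))"
definition "P2 a b = snd (snd (PR a b))"

lemma T: "is_terminal C T"
  using cc unfolding cartesian_closed_def T_def by (metis someI)

lemma PR: "a \<in> Obj C \<Longrightarrow> b \<in> Obj C \<Longrightarrow> is_product C a b (PO a b) (P1 a b) (P2 a b)"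
proof -
  assume "a \<in> Obj C" "b \<in> Obj C"
  then obtain p p1 p2 where "is_product C a b p p1 p2" using cc unfolding cartesian_closed_def by blast
  then have "is_product C a b (fst (p, p1, p2)) (fst (snd (p, p1, p2))) (snd (snd (p, p1, p2)))" by simp
  then show ?thesis unfolding PO_def P1_def P2_def PR_def by (rule someI)
qed

lemma exp_exists: "x \<in> Obj C \<Longrightarrow> y \<in> Obj C \<Longrightarrow> \<exists>e ev. is_exponential C x y e (PO e x) (P1 e x) (P2 e x) ev"
proof -
  assume xy: "x \<in> Obj C" "y \<in> Obj C"
  then obtain e p p1 p2 ev where E: "is_exponential C x y e p p1 p2 ev"
    using cc unfolding cartesian_closed_def by blast
  have e: "e \<in> Obj C" using hom_objs[OF prod_p1[OF exp_prod[OF E, THEN conjunct1]]] by blast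
  have "is_iso C (Idt C e)" by (rule isoI[OF id_hom[OF e] id_hom[OF e]]) (simp_all add: idl[OF id_hom[OF e]])
  then show ?thesis using exp_transfer[OF E id_hom[OF e] _ PR[OF e xy(1)]] by blast
qed

definition EXP :: "'o \<Rightarrow> 'o \<Rightarrow> 'o \<times> 'm" where
  "EXP x y = (SOME r. is_exponential C x y (fst r) (PO (fst r) x) (P1 (fst r) x) (P2 (fst r) x) (snd r))"
definition "EO x y = fst (EXP x y)"
definition "EV x y = snd (EXP x y)"

lemma EXP: "x \<in> Obj C \<Longrightarrow> y \<in> Obj C \<Longrightarrow>
   is_exponential C x y (EO x y) (PO (EO x y) x) (P1 (EO x y) x) (P2 (EO x y) x) (EV x y)"
proof -
  assume "x \<in> Obj C" "y \<in> Obj C"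
  then obtain e ev where "is_exponential C x y e (PO e x) (P1 e x) (P2 e x) ev" using exp_exists by blast
  then have "is_exponential C x y (fst (e, ev)) (PO (fst (e, ev)) x) (P1 (fst (e, ev)) x) (P2 (fst (e, ev)) x) (snd (e, ev))"
    by simp
  then show ?thesis unfolding EO_def EV_def EXP_def by (rule someI)
qed

lemma EO_obj: "x \<in> Obj C \<Longrightarrow> y \<in> Obj C \<Longrightarrow> EO x y \<in> Obj C"
  using hom_objs[OF prod_p1[OF exp_prod[OF EXP, THEN conjunct1]]] by blast

lemma PO_obj: "a \<in> Obj C \<Longrightarrow> b \<in> Obj C \<Longrightarrow> PO a b \<in> Obj C"
  using prod_o[OF PR] by blast

lemma T_obj: "T \<in> Obj C" using T unfolding is_terminal_def by blast

definition pairing :: "'o \<Rightarrow> 'o \<Rightarrow> 'o \<Rightarrow> 'm \<Rightarrow> 'm \<Rightarrow> 'm" where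
  "pairing c a b f g = (THE h. h \<in> hom C c (PO a b) \<and> Cmp C (P1 a b) h = f \<and> Cmp C (P2 a b) h = g)"

definition XA :: "'o \<Rightarrow> 'o \<Rightarrow> 'o \<Rightarrow> 'm \<Rightarrow> 'm" where
  "XA c x y g = xarr C (PO (EO x y) x) (P1 (EO x y) x) (P2 (EO x y) x) (PO c x) (P1 c x) (P2 c x) g"

definition lam :: "'o \<Rightarrow> 'o \<Rightarrow> 'o \<Rightarrow> 'm \<Rightarrow> 'm" where
  "lam c x y f = (THE g. g \<in> hom C c (EO x y) \<and> Cmp C (EV x y) (XA c x y g) = f)"

lemma pairing: "a \<in> Obj C \<Longrightarrow> b \<in> Obj C \<Longrightarrow> f \<in> hom C c a \<Longrightarrow> g \<in> hom C c b \<Longrightarrow>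
  pairing c a b f g \<in> hom C c (PO a b) \<and> Cmp C (P1 a b) (pairing c a b f g) = f \<and> Cmp C (P2 a b) (pairing c a b f g) = g"
proof -
  assume ab: "a \<in> Obj C" "b \<in> Obj C" and fg: "f \<in> hom C c a" "g \<in> hom C c b"
  obtain h where "h \<in> hom C c (PO a b)" "Cmp C (P1 a b) h = f" "Cmp C (P2 a b) h = g"
    using prod_ex[OF PR[OF ab] fg] by blast
  then have "\<exists>!h. h \<in> hom C c (PO a b) \<and> Cmp C (P1 a b) h = f \<and> Cmp C (P2 a b) h = g"
    using prod_uniq[OF PR[OF ab]] by (intro ex1I[of _ h]) auto
  then show ?thesis unfolding pairing_def by (rule theI')
qed

lemma pairing_uniq: "a \<in> Obj C \<Longrightarrow> b \<in> Obj C \<Longrightarrow> h \<in> hom C c (PO a b) \<Longrightarrow>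
  pairing c a b (Cmp C (P1 a b) h) (Cmp C (P2 a b) h) = h"
proof -
  assume ab: "a \<in> Obj C" "b \<in> Obj C" and h: "h \<in> hom C c (PO a b)"
  note pp = pairing[OF ab comp_hom[OF h prod_p1[OF PR[OF ab]]] comp_hom[OF h prod_p2[OF PR[OF ab]]]]
  show ?thesis by (rule prod_uniq[OF PR[OF ab] pp[THEN conjunct1] h]) (use pp in simp_all)
qed

lemma XA: "c \<in> Obj C \<Longrightarrow> x \<in> Obj C \<Longrightarrow> y \<in> Obj C \<Longrightarrow> g \<in> hom C c (EO x y) \<Longrightarrow>
   XA c x y g \<in> hom C (PO c x) (PO (EO x y) x) \<and> Cmp C (P1 (EO x y) x) (XA c x y g) = Cmp C g (P1 c x) \<and>
   Cmp C (P2 (EO x y) x) (XA c x y g) = P2 c x"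
  unfolding XA_def by (rule xarr[OF PR[OF EO_obj] PR]) assumption+

lemma XA_uniq: "c \<in> Obj C \<Longrightarrow> x \<in> Obj C \<Longrightarrow> y \<in> Obj C \<Longrightarrow> g \<in> hom C c (EO x y) \<Longrightarrow>
   h \<in> hom C (PO c x) (PO (EO x y) x) \<Longrightarrow> Cmp C (P1 (EO x y) x) h = Cmp C g (P1 c x) \<Longrightarrow>
   Cmp C (P2 (EO x y) x) h = P2 c x \<Longrightarrow> h = XA c x y g"
  unfolding XA_def by (rule xarr_uniq[OF PR[OF EO_obj] PR]) assumption+

lemma lam: "c \<in> Obj C \<Longrightarrow> x \<in> Obj C \<Longrightarrow> y \<in> Obj C \<Longrightarrow> f \<in> hom C (PO c x) y \<Longrightarrow>
   lam c x y f \<in> hom C c (EO x y) \<and> Cmp C (EV x y) (XA c x y (lam c x y f)) = f"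
proof -
  assume o: "c \<in> Obj C" "x \<in> Obj C" "y \<in> Obj C" and f: "f \<in> hom C (PO c x) y"
  note E = EXP[OF o(2,3)]
  obtain g where "g \<in> hom C c (EO x y)" "Cmp C (EV x y) (XA c x y g) = f"
    using exp_ex[OF E PR[OF o(1,2)] f] unfolding XA_def by blast
  then have "\<exists>!g. g \<in> hom C c (EO x y) \<and> Cmp C (EV x y) (XA c x y g) = f"
    using exp_uniq[OF E PR[OF o(1,2)]] unfolding XA_def by (intro ex1I[of _ g]) auto
  then show ?thesis unfolding lam_def by (rule theI')
qed

lemma lam_uniq: "c \<in> Obj C \<Longrightarrow> x \<in> Obj C \<Longrightarrow> y \<in> Obj C \<Longrightarrow> g \<in> hom C c (EO x y) \<Longrightarrow>
   lam c x y (Cmp C (EV x y) (XA c x y g)) = g"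
proof -
  assume o: "c \<in> Obj C" "x \<in> Obj C" "y \<in> Obj C" and g: "g \<in> hom C c (EO x y)"
  have ev: "EV x y \<in> hom C (PO (EO x y) x) y" using EXP[OF o(2,3)] exp_prod by blast
  have f: "Cmp C (EV x y) (XA c x y g) \<in> hom C (PO c x) y" using XA[OF o g] ev comp_hom by blast
  note L = lam[OF o f]
  show ?thesis by (rule exp_uniq[OF EXP[OF o(2,3)] PR[OF o(1,2)] L[THEN conjunct1] g]) (use L in \<open>simp add: XA_def\<close>)
qed

primrec osem :: "'o bimag \<Rightarrow> 'o" where
  "osem (Base s) = s"
| "osem One = T"
| "osem (Prod A B) = PO (osem A) (osem B)"
| "osem (Exp A B) = EO (osem A) (osem B)"

primrec sem :: "'o tm \<Rightarrow> 'm" where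
  "sem (TId A) = Idt C (osem A)"
| "sem (TComp g f) = Cmp C (sem g) (sem f)"
| "sem (TBang A) = (THE h. h \<in> hom C (osem A) T)"
| "sem (TFst A B) = P1 (osem A) (osem B)"
| "sem (TSnd A B) = P2 (osem A) (osem B)"
| "sem (TPair f g) = pairing (osem (tdom f)) (osem (tcod f)) (osem (tcod g)) (sem f) (sem g)"
| "sem (TEv X Y) = EV (osem X) (osem Y)"
| "sem (TLam f) = lam (osem (lftP (tdom f))) (osem (rgtP (tdom f))) (osem (tcod f)) (sem f)"

lemma osem_obj: "S \<subseteq> Obj C \<Longrightarrow> A \<in> BiMag S \<Longrightarrow> osem A \<in> Obj C"
  by (induction A) (auto simp: T_obj PO_obj EO_obj)

lemma bang: "a \<in> Obj C \<Longrightarrow> (THE h. h \<in> hom C a T) \<in> hom C a T"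
proof -
  assume a: "a \<in> Obj C"
  have "\<exists>!h. h \<in> hom C a T" using T a unfolding is_terminal_def by blast
  then show ?thesis by (rule theI')
qed

lemma bang_uniq: "a \<in> Obj C \<Longrightarrow> f \<in> hom C a T \<Longrightarrow> g \<in> hom C a T \<Longrightarrow> f = g"
  using T unfolding is_terminal_def by blast

lemma sem_hom:
  assumes SO: "S \<subseteq> Obj C" and ty: "typed S t A B"
  shows "sem t \<in> hom C (osem A) (osem B)"
  using ty
proof (induction rule: typed.induct)
  case (t_id A) then show ?case using id_hom osem_obj[OF SO] by simp
next
  case (t_comp f A B g C') then show ?case using comp_hom by simp
next
  case (t_bang A) then show ?case using bang osem_obj[OF SO] by simp
next
  case (t_fst A B) then show ?case using prod_p1[OF PR] osem_obj[OF SO] by simp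
next
  case (t_snd A B) then show ?case using prod_p2[OF PR] osem_obj[OF SO] by simp
next
  case (t_pair f C' A g B)
  have tt: "tdom f = C'" "tcod f = A" "tcod g = B" using typed_tdc[OF t_pair.hyps(1)] typed_tdc[OF t_pair.hyps(2)] by auto
  have o: "osem A \<in> Obj C" "osem B \<in> Obj C"
    using typed_BiMag[OF t_pair.hyps(1)] typed_BiMag[OF t_pair.hyps(2)] osem_obj[OF SO] by auto
  show ?case using pairing[OF o t_pair.IH] tt by simp
next
  case (t_ev X Y) then show ?case using exp_prod[OF EXP] osem_obj[OF SO] by simp
next
  case (t_lam f C' X Y)
  have tt: "tdom f = Prod C' X" "tcod f = Y" using typed_tdc[OF t_lam.hyps] by auto
  have o: "osem C' \<in> Obj C" "osem X \<in> Obj C" "osem Y \<in> Obj C"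
    using typed_BiMag[OF t_lam.hyps] osem_obj[OF SO] by auto
  then show ?case using lam[OF o] t_lam.IH tt by simp
qed

lemma sound:
  assumes SO: "S \<subseteq> Obj C" and te: "teq S s t"
  shows "sem s = sem t"
  using te
proof (induction rule: teq.induct)
  case (e_refl f A B) then show ?case by simp
next
  case (e_sym f g) then show ?case by simp
next
  case (e_trans f g h) then show ?case by simp
next
  case (e_comp f f' g g' A B C') then show ?case by simp
next
  case (e_pair f f' g g' C' A B)
  have "tdom f = tdom f'" "tcod f = tcod f'" "tcod g = tcod g'"
    using typed_tdc[OF teq_typedD[OF e_pair.hyps(1) e_pair.hyps(3)]] typed_tdc[OF teq_typedD[OF e_pair.hyps(2) e_pair.hyps(4)]]
      typed_tdc[OF e_pair.hyps(3)] typed_tdc[OF e_pair.hyps(4)] by auto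
  then show ?case using e_pair.IH by simp
next
  case (e_lam f f' C' X Y)
  have "tdom f = tdom f'" "tcod f = tcod f'"
    using typed_tdc[OF teq_typedD[OF e_lam.hyps(1) e_lam.hyps(2)]] typed_tdc[OF e_lam.hyps(2)] by auto
  then show ?case using e_lam.IH by simp
next
  case (e_idl f A B) then show ?case using idl[OF sem_hom[OF SO e_idl]] by simp
next
  case (e_idr f A B) then show ?case using idr[OF sem_hom[OF SO e_idr]] by simp
next
  case (e_assoc f A B g C' h D)
  then show ?case using assoc[OF sem_hom[OF SO e_assoc(1)] sem_hom[OF SO e_assoc(2)] sem_hom[OF SO e_assoc(3)]] by simp
next
  case (e_bang f A)
  have o: "osem A \<in> Obj C" using typed_BiMag[OF e_bang] osem_obj[OF SO] by blast
  have "sem f \<in> hom C (osem A) T" using sem_hom[OF SO e_bang] by simp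
  then show ?case using bang_uniq[OF o _ bang[OF o]] by simp
next
  case (e_fst f C' A g B)
  have o: "osem A \<in> Obj C" "osem B \<in> Obj C" using typed_BiMag[OF e_fst(1)] typed_BiMag[OF e_fst(2)] osem_obj[OF SO] by auto
  have tt: "tdom f = C'" "tcod f = A" "tcod g = B" using typed_tdc[OF e_fst(1)] typed_tdc[OF e_fst(2)] by auto
  show ?case using pairing[OF o sem_hom[OF SO e_fst(1)] sem_hom[OF SO e_fst(2)]] tt by simp
next
  case (e_snd f C' A g B)
  have o: "osem A \<in> Obj C" "osem B \<in> Obj C" using typed_BiMag[OF e_snd(1)] typed_BiMag[OF e_snd(2)] osem_obj[OF SO] by auto
  have tt: "tdom f = C'" "tcod f = A" "tcod g = B" using typed_tdc[OF e_snd(1)] typed_tdc[OF e_snd(2)] by auto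
  show ?case using pairing[OF o sem_hom[OF SO e_snd(1)] sem_hom[OF SO e_snd(2)]] tt by simp
next
  case (e_pair_eta h C' A B)
  have AB: "A \<in> BiMag S" "B \<in> BiMag S" using typed_BiMag[OF e_pair_eta] by auto
  have o: "osem A \<in> Obj C" "osem B \<in> Obj C" using AB osem_obj[OF SO] by auto
  have tt: "tdom h = C'" using typed_tdc[OF e_pair_eta] by auto
  have "sem h \<in> hom C (osem C') (PO (osem A) (osem B))" using sem_hom[OF SO e_pair_eta] by simp
  then show ?case using pairing_uniq[OF o] tt by simp
next
  case (e_beta f C' X Y)
  have B: "C' \<in> BiMag S" "X \<in> BiMag S" "Y \<in> BiMag S" using typed_BiMag[OF e_beta] by auto
  have o: "osem C' \<in> Obj C" "osem X \<in> Obj C" "osem Y \<in> Obj C" using B osem_obj[OF SO] by auto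
  have tt: "tdom f = Prod C' X" "tcod f = Y" using typed_tdc[OF e_beta] by auto
  have sf: "sem f \<in> hom C (PO (osem C') (osem X)) (osem Y)" using sem_hom[OF SO e_beta] by simp
  note L = lam[OF o sf]
  let ?l = "lam (osem C') (osem X) (osem Y) (sem f)"
  have p1: "P1 (osem C') (osem X) \<in> hom C (PO (osem C') (osem X)) (osem C')"
    "P2 (osem C') (osem X) \<in> hom C (PO (osem C') (osem X)) (osem X)"
    using prod_p1[OF PR[OF o(1,2)]] prod_p2[OF PR[OF o(1,2)]] by auto
  note pr = pairing[OF EO_obj[OF o(2,3)] o(2) comp_hom[OF p1(1) L[THEN conjunct1]] p1(2)]
  have "pairing (PO (osem C') (osem X)) (EO (osem X) (osem Y)) (osem X)
      (Cmp C ?l (P1 (osem C') (osem X))) (P2 (osem C') (osem X)) = XA (osem C') (osem X) (osem Y) ?l"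
    by (rule XA_uniq[OF o L[THEN conjunct1]]) (use pr in simp_all)
  then show ?case using tt L by simp
next
  case (e_eta g C' X Y)
  have B: "C' \<in> BiMag S" "X \<in> BiMag S" "Y \<in> BiMag S" using typed_BiMag[OF e_eta] by auto
  have o: "osem C' \<in> Obj C" "osem X \<in> Obj C" "osem Y \<in> Obj C" using B osem_obj[OF SO] by auto
  have tt: "tdom g = C'" "tcod g = Exp X Y" using typed_tdc[OF e_eta] by auto
  have sg: "sem g \<in> hom C (osem C') (EO (osem X) (osem Y))" using sem_hom[OF SO e_eta] by simp
  have p1: "P1 (osem C') (osem X) \<in> hom C (PO (osem C') (osem X)) (osem C')"
    "P2 (osem C') (osem X) \<in> hom C (PO (osem C') (osem X)) (osem X)"
    using prod_p1[OF PR[OF o(1,2)]] prod_p2[OF PR[OF o(1,2)]] by auto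
  note pr = pairing[OF EO_obj[OF o(2,3)] o(2) comp_hom[OF p1(1) sg] p1(2)]
  have "pairing (PO (osem C') (osem X)) (EO (osem X) (osem Y)) (osem X)
      (Cmp C (sem g) (P1 (osem C') (osem X))) (P2 (osem C') (osem X)) = XA (osem C') (osem X) (osem Y) (sem g)"
    by (rule XA_uniq[OF o sg]) (use pr in simp_all)
  then show ?case using tt lam_uniq[OF o sg] by simp
qed

end


lemma functorI:
  assumes "category C" "category D" "\<And>a. a \<in> Obj C \<Longrightarrow> Fo a \<in> Obj D"
    and hm: "\<And>f a b. f \<in> hom C a b \<Longrightarrow> Fm f \<in> hom D (Fo a) (Fo b)"
    and "\<And>a. a \<in> Obj C \<Longrightarrow> Fm (Idt C a) = Idt D (Fo a)"
    and cm: "\<And>f g a b c. f \<in> hom C a b \<Longrightarrow> g \<in> hom C b c \<Longrightarrow> Fm (Cmp C g f) = Cmp D (Fm g) (Fm f)"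
  shows "functor C D Fo Fm"
  unfolding functor_def
proof (intro conjI ballI allI impI)
  fix f assume "f \<in> Arr C"
  then have "f \<in> hom C (Dom C f) (Cod C f)" unfolding hom_def by simp
  then show "Fm f \<in> hom D (Fo (Dom C f)) (Fo (Cod C f))" by (rule hm)
next
  fix f g assume a: "f \<in> Arr C \<and> g \<in> Arr C \<and> Cod C f = Dom C g"
  then have "f \<in> hom C (Dom C f) (Cod C f)" "g \<in> hom C (Cod C f) (Cod C g)" unfolding hom_def by auto
  then show "Fm (Cmp C g f) = Cmp D (Fm g) (Fm f)" by (rule cm)
qed (use assms in auto)

context ccc
begin

abbreviation "SS \<equiv> Obj C"
abbreviation "Ct \<equiv> Pull C osem (BiMag SS)"

definition iota :: "'o bimag \<times> 'o bimag \<times> 'o tm set \<Rightarrow> 'o bimag \<times> 'o bimag \<times> 'm" where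
  "iota u = (fst u, fst (snd u), sem (SOME t. t \<in> snd (snd u)))"

lemma osem_surj: "osem ` BiMag SS = SS"
proof
  show "osem ` BiMag SS \<subseteq> SS" using osem_obj[of SS] by auto
  show "SS \<subseteq> osem ` BiMag SS"
  proof
    fix c assume "c \<in> SS"
    then have "Base c \<in> BiMag SS" by simp
    then show "c \<in> osem ` BiMag SS" by (metis image_eqI osem.simps(1))
  qed
qed

lemma PL: "pull C osem (BiMag SS)"
  unfolding pull_def pull_axioms_def using cat osem_surj by (simp add: cat_def)

lemma cat_Ct: "category Ct" using pull.cat_Pull[OF PL] .

lemma iota: "typed SS t A B \<Longrightarrow> iota (A, B, cls SS t) = (A, B, sem t)"
  unfolding iota_def using sound[OF subset_refl some_cls] by simp

lemma osem_hom: "A \<in> BiMag SS \<Longrightarrow> osem A \<in> SS" using osem_obj[of SS] by simp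

lemma functor_iota: "functor (CFam SS) Ct (\<lambda>A. A) iota"
proof (rule functorI[OF cat_CFam cat_Ct])
  show "\<And>a. a \<in> Obj (CFam SS) \<Longrightarrow> a \<in> Obj Ct" by simp
next
  fix f a b assume "f \<in> hom (CFam SS) a b"
  then obtain t where t: "f = (a, b, cls SS t)" "typed SS t a b" by (auto simp: hom_CFam)
  show "iota f \<in> hom Ct a b" using t iota[OF t(2)] sem_hom[OF subset_refl t(2)] typed_BiMag[OF t(2)]
    by (simp add: hom_Pull)
next
  fix a assume a: "a \<in> Obj (CFam SS)"
  then have "typed SS (TId a) a a" by (simp add: typed.t_id)
  then show "iota (Idt (CFam SS) a) = Idt Ct a" using iota by simp
next
  fix f g a b c assume "f \<in> hom (CFam SS) a b" "g \<in> hom (CFam SS) b c"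
  then obtain t s where t: "f = (a, b, cls SS t)" "typed SS t a b" "g = (b, c, cls SS s)" "typed SS s b c"
    by (auto simp: hom_CFam)
  show "iota (Cmp (CFam SS) g f) = Cmp Ct (iota g) (iota f)"
    using t Cmp_CFam[OF t(2) t(4)] iota[OF typed.t_comp[OF t(2) t(4)]] iota[OF t(2)] iota[OF t(4)] by simp
qed

lemma Ct_terminal: "is_terminal Ct One"
  using pull.Pull_terminal[OF PL, of One] T by simp

lemma Ct_product: "A \<in> BiMag SS \<Longrightarrow> B \<in> BiMag SS \<Longrightarrow>
  is_product Ct A B (Prod A B) (Prod A B, A, P1 (osem A) (osem B)) (Prod A B, B, P2 (osem A) (osem B))"
  using pull.Pull_product[OF PL, of A B "Prod A B"] PR[OF osem_hom osem_hom] by simp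

lemma Ct_exp: "X \<in> BiMag SS \<Longrightarrow> Y \<in> BiMag SS \<Longrightarrow>
  is_exponential Ct X Y (Exp X Y) (Prod (Exp X Y) X)
    (Prod (Exp X Y) X, Exp X Y, P1 (EO (osem X) (osem Y)) (osem X))
    (Prod (Exp X Y) X, X, P2 (EO (osem X) (osem Y)) (osem X))
    (Prod (Exp X Y) X, Y, EV (osem X) (osem Y))"
  using pull.Pull_exp[OF PL, of X Y "Exp X Y" "Prod (Exp X Y) X"] EXP[OF osem_hom osem_hom] by simp

lemma cc_Ct: "cartesian_closed Ct"
  unfolding cartesian_closed_def
proof (intro conjI ballI)
  show "category Ct" by (rule cat_Ct)
  show "\<exists>t. is_terminal Ct t" using Ct_terminal by blast
next
  fix a b assume "a \<in> Obj Ct" "b \<in> Obj Ct"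
  then show "\<exists>p p1 p2. is_product Ct a b p p1 p2" using Ct_product by fastforce
next
  fix x y assume "x \<in> Obj Ct" "y \<in> Obj Ct"
  then show "\<exists>e p p1 p2 ev. is_exponential Ct x y e p p1 p2 ev" using Ct_exp by fastforce
qed

lemma iota_product: "A \<in> BiMag SS \<Longrightarrow> B \<in> BiMag SS \<Longrightarrow>
  is_product Ct A B (Prod A B) (iota (Prod A B, A, cls SS (TFst A B))) (iota (Prod A B, B, cls SS (TSnd A B)))"
  using Ct_product iota[OF typed.t_fst] iota[OF typed.t_snd] by simp

lemma iota_exp: "X \<in> BiMag SS \<Longrightarrow> Y \<in> BiMag SS \<Longrightarrow>
  is_exponential Ct X Y (Exp X Y) (Prod (Exp X Y) X)
    (iota (Prod (Exp X Y) X, Exp X Y, cls SS (TFst (Exp X Y) X)))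
    (iota (Prod (Exp X Y) X, X, cls SS (TSnd (Exp X Y) X)))
    (iota (Prod (Exp X Y) X, Y, cls SS (TEv X Y)))"
proof -
  assume XY: "X \<in> BiMag SS" "Y \<in> BiMag SS"
  have E: "Exp X Y \<in> BiMag SS" using XY by simp
  show ?thesis using Ct_exp[OF XY] iota[OF typed.t_fst[OF E XY(1)]] iota[OF typed.t_snd[OF E XY(1)]]
    iota[OF typed.t_ev[OF XY]] by simp
qed

lemma cc_iota: "cc_functor (CFam SS) Ct (\<lambda>A. A) iota"
  unfolding cc_functor_def
proof (intro conjI allI impI)
  show F: "functor (CFam SS) Ct (\<lambda>A. A) iota" by (rule functor_iota)
  fix t assume "is_terminal (CFam SS) t"
  then show "is_terminal Ct t" using preserve_terminal[OF F CFam_terminal _] Ct_terminal by simp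
next
  have F: "functor (CFam SS) Ct (\<lambda>A. A) iota" by (rule functor_iota)
  have prodpres: "\<And>a b p p1 p2. is_product (CFam SS) a b p p1 p2 \<Longrightarrow> is_product Ct a b p (iota p1) (iota p2)"
  proof -
    fix a b p p1 p2 assume P: "is_product (CFam SS) a b p p1 p2"
    have ab: "a \<in> BiMag SS" "b \<in> BiMag SS"
      using CF.hom_objs[OF prod_p1[OF P]] CF.hom_objs[OF prod_p2[OF P]] by auto
    show "is_product Ct a b p (iota p1) (iota p2)"
      using preserve_product[OF F CFam_product[OF ab] _ P] iota_product[OF ab] by simp
  qed
  fix a b p p1 p2
  show "is_product (CFam SS) a b p p1 p2 \<Longrightarrow> is_product Ct a b p (iota p1) (iota p2)" by (rule prodpres)
  fix x y e ev
  assume E: "is_exponential (CFam SS) x y e p p1 p2 ev"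
  have Pp: "is_product (CFam SS) e x p p1 p2" and ev: "ev \<in> hom (CFam SS) p y" using CF.exp_prod[OF E] by auto
  have xy: "x \<in> BiMag SS" "y \<in> BiMag SS"
    using CF.hom_objs[OF prod_p2[OF Pp]] CF.hom_objs[OF ev] by auto
  show "is_exponential Ct x y e p (iota p1) (iota p2) (iota ev)"
    using preserve_exp[OF F CFam_exp[OF xy] _ E] iota_exp[OF xy] prodpres[OF Pp] by simp
qed

lemma equiv_Ct: "equivalent_cats C Ct"
proof -
  let ?Fm = "\<lambda>f. (Base (Dom C f), Base (Cod C f), f)"
  let ?Gm = "\<lambda>u :: 'o bimag \<times> 'o bimag \<times> 'm. snd (snd u)"
  let ?eps = "\<lambda>A. (Base (osem A), A, Idt C (osem A))"
  have F: "functor C Ct Base ?Fm"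
  proof (rule functorI[OF cat cat_Ct])
    show "\<And>a. a \<in> Obj C \<Longrightarrow> Base a \<in> Obj Ct" by simp
  next
    fix f a b assume f: "f \<in> hom C a b"
    have "Dom C f = a" "Cod C f = b" using f by (simp_all add: hom_def)
    then show "?Fm f \<in> hom Ct (Base a) (Base b)" using hom_objs[OF f] f by (simp add: hom_Pull)
  next
    fix a assume "a \<in> Obj C"
    then show "?Fm (Idt C a) = Idt Ct (Base a)" using id_hom[of a] by (simp add: hom_def)
  next
    fix f g a b c assume "f \<in> hom C a b" "g \<in> hom C b c"
    then show "?Fm (Cmp C g f) = Cmp Ct (?Fm g) (?Fm f)" using comp_hom[of f a b g c] by (simp add: hom_def)
  qed
  have G: "functor Ct C osem ?Gm"
  proof (rule functorI[OF cat_Ct cat])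
    show "\<And>a. a \<in> Obj Ct \<Longrightarrow> osem a \<in> Obj C" using osem_hom by simp
  next
    fix f a b assume "f \<in> hom Ct a b"
    then show "?Gm f \<in> hom C (osem a) (osem b)" by (auto elim!: hom_PullE)
  next
    fix a assume "a \<in> Obj Ct"
    then show "?Gm (Idt Ct a) = Idt C (osem a)" by simp
  next
    fix f g a b c assume "f \<in> hom Ct a b" "g \<in> hom Ct b c"
    then show "?Gm (Cmp Ct g f) = Cmp C (?Gm g) (?Gm f)" by (auto elim!: hom_PullE)
  qed
  have N1: "nat_iso C C id id (osem \<circ> Base) (?Gm \<circ> ?Fm) (Idt C)"
    unfolding nat_iso_def
  proof (intro conjI ballI)
    fix a assume a: "a \<in> Obj C"
    show "Idt C a \<in> hom C (id a) ((osem \<circ> Base) a)" using id_hom[OF a] by simp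
    show "is_iso C (Idt C a)" by (rule isoI[OF id_hom[OF a] id_hom[OF a]]) (simp_all add: idl[OF id_hom[OF a]])
  next
    fix f assume "f \<in> Arr C"
    then have f: "f \<in> hom C (Dom C f) (Cod C f)" by (simp add: hom_def)
    show "Cmp C ((?Gm \<circ> ?Fm) f) (Idt C (Dom C f)) = Cmp C (Idt C (Cod C f)) (id f)"
      using idl[OF f] idr[OF f] by simp
  qed
  have N2: "nat_iso Ct Ct (Base \<circ> osem) (?Fm \<circ> ?Gm) id id ?eps"
    unfolding nat_iso_def
  proof (intro conjI ballI)
    fix A assume A: "A \<in> Obj Ct"
    then have o: "osem A \<in> Obj C" using osem_hom by simp
    show "?eps A \<in> hom Ct ((Base \<circ> osem) A) (id A)" using A o id_hom[OF o] by (simp add: hom_Pull)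
    have h1: "?eps A \<in> hom Ct (Base (osem A)) A" using A o id_hom[OF o] by (simp add: hom_Pull)
    have h2: "(A, Base (osem A), Idt C (osem A)) \<in> hom Ct A (Base (osem A))" using A o id_hom[OF o] by (simp add: hom_Pull)
    show "is_iso Ct (?eps A)"
      by (rule cat.isoI[OF cat_Ct[unfolded cat_def[symmetric]] h1 h2]) (simp_all add: idl[OF id_hom[OF o]])
  next
    fix f assume "f \<in> Arr Ct"
    then obtain A B h where f: "f = (A, B, h)" "A \<in> BiMag SS" "B \<in> BiMag SS" "h \<in> hom C (osem A) (osem B)"
      unfolding Pull_def by auto
    have "Dom C h = osem A" "Cod C h = osem B" using f(4) by (auto simp: hom_def)
    then show "Cmp Ct (id f) (?eps (Dom Ct f)) = Cmp Ct (?eps (Cod Ct f)) ((?Fm \<circ> ?Gm) f)"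
      using f idl[OF f(4)] idr[OF f(4)] by simp
  qed
  show ?thesis unfolding equivalent_cats_def using F G N1 N2 by blast
qed

end

theorem mainTheorem8:
  fixes C :: "('o, 'm) cat"
  assumes "cartesian_closed C"
  shows "\<exists>(S :: 'o set) (Ct :: ('o bimag, 'o bimag \<times> 'o bimag \<times> 'm) cat) \<iota>.
           sorted_ccc S Ct \<iota> \<and> equivalent_cats C Ct"
proof -
  interpret ccc C using assms by (simp add: ccc_def ccc_axioms_def cat_def cartesian_closed_def)
  have "sorted_ccc (Obj C) (Pull C osem (BiMag (Obj C))) iota"
    unfolding sorted_ccc_def using cc_Ct cc_iota by simp
  then show ?thesis using equiv_Ct by blast
qed

end
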